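(* Let $G$ and $H$ be graphs on $m$ and $n$ vertices respectively, and let $u$ be a vertex of $G$ whose degree $d_u$ in $G$ satisfies $d_u\notin\sigma_u(G)$. Then $\uparrow^{2}(G\vee H)$ has Laplacian perfect state transfer between $(0,u)$ and $(1,u)$ if and only if $\sigma_u(G)\subset\mathbb{Z}$ and one of the following holds: (1) $G$ is connected, $\nu_2(m+n)>\nu_2(d_u+n)$, and $\nu_2(\lambda+n)>\nu_2(d_u+n)$ for all $\lambda\in\sigma_u(G)\setminus \{0\}$; (2) $G$ is disconnected, $u$ is not an isolated vertex of $G$, $\nu_2(n)>\nu_2(d_u+n)$, $\nu_2(m+n)>\nu_2(d_u+n)$, and $\nu_2(\lambda+n)>\nu_2(d_u+n)$ for all $\lambda\in\sigma_u(G)\setminus \{0\}$. Moreover, the minimum time of Laplacian perfect state transfer is $\tau = \frac{\pi}{2h}$ with $h=\gcd(S)$, where $S=\{\lambda+n:\lambda\in(\sigma_u(G)\setminus \{0\})\cup \{d_u,m\}\}$ if (1) holds, and $S=\{\lambda+n:\lambda\in\sigma_u(G)\cup \{d_u,m\}\}$ otherwise.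
   Context: All graphs are simple, undirected and unweighted. The join $G\vee H$ is obtained from the disjoint union of $G$ and $H$ by adding all edges between $V(G)$ and $V(H)$. $\sigma_u(G)$ is the Laplacian eigenvalue support of $u$ in $G$: the set of distinct eigenvalues $\lambda$ of the Laplacian $L=D-A$ of $G$ with $E_\lambda\mathbf{e}_u\neq\mathbf{0}$, $E_\lambda$ the orthogonal projection onto the $\lambda$-eigenspace. For a nonzero integer $n$, $\nu_2(n)$ is the exponent of the largest power of $2$ dividing $n$. The blow-up $\uparrow^{2}X$ has vertex set $\mathbb{Z}_2\times V(X)$, with $(l,a)\sim(m,b)$ iff $a\sim b$ in $X$. A graph with Laplacian $L$ has Laplacian perfect state transfer between vertices $a,b$ at time $\tau>0$ if $\exp(i\tau L)\mathbf{e}_a=\gamma\mathbf{e}_b$ for some $\gamma\in\mathbb{C}$. *)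

theory Defs
  imports "HOL-Analysis.Analysis"
begin

definition simple_graph :: "('v \<Rightarrow> 'v \<Rightarrow> bool) \<Rightarrow> bool" where
  "simple_graph E \<longleftrightarrow> (\<forall>x y. E x y \<longrightarrow> E y x) \<and> (\<forall>x. \<not> E x x)"

definition degree :: "('v \<Rightarrow> 'v \<Rightarrow> bool) \<Rightarrow> 'v \<Rightarrow> nat" where
  "degree E u = card {v. E u v}"

definition connected_graph :: "('v \<Rightarrow> 'v \<Rightarrow> bool) \<Rightarrow> bool" where
  "connected_graph E \<longleftrightarrow> (\<forall>x y. E\<^sup>*\<^sup>* x y)"

definition isolated :: "('v \<Rightarrow> 'v \<Rightarrow> bool) \<Rightarrow> 'v \<Rightarrow> bool" where
  "isolated E u \<longleftrightarrow> (\<forall>v. \<not> E u v)"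

fun graph_join :: "('a \<Rightarrow> 'a \<Rightarrow> bool) \<Rightarrow> ('b \<Rightarrow> 'b \<Rightarrow> bool) \<Rightarrow> ('a + 'b) \<Rightarrow> ('a + 'b) \<Rightarrow> bool" where
  "graph_join G H (Inl x) (Inl y) = G x y"
| "graph_join G H (Inr x) (Inr y) = H x y"
| "graph_join G H (Inl x) (Inr y) = True"
| "graph_join G H (Inr x) (Inl y) = True"

text \<open>Blow-up by 2: vertex set Z_2 x V(X), Z_2 represented by bool (False = 0, True = 1).\<close>
definition blowup2 :: "('v \<Rightarrow> 'v \<Rightarrow> bool) \<Rightarrow> (bool \<times> 'v) \<Rightarrow> (bool \<times> 'v) \<Rightarrow> bool" where
  "blowup2 X p q \<longleftrightarrow> X (snd p) (snd q)"

definition laplacian :: "('v::finite \<Rightarrow> 'v \<Rightarrow> bool) \<Rightarrow> real^'v^'v" where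
  "laplacian E = (\<chi> i j. (if i = j then real (degree E i) else 0) - (if E i j then 1 else 0))"

definition eigenspace :: "real^'v^'v \<Rightarrow> real \<Rightarrow> (real^'v) set" where
  "eigenspace M lam = {x. M *v x = lam *\<^sub>R x}"

definition orth_proj :: "(real^'v::finite) set \<Rightarrow> real^'v \<Rightarrow> real^'v" where
  "orth_proj S x = (THE p. p \<in> S \<and> (\<forall>y\<in>S. (x - p) \<bullet> y = 0))"

definition eig_support :: "('v::finite \<Rightarrow> 'v \<Rightarrow> bool) \<Rightarrow> 'v \<Rightarrow> real set" where
  "eig_support E u = {lam. (\<exists>x. x \<noteq> 0 \<and> laplacian E *v x = lam *\<^sub>R x)
       \<and> orth_proj (eigenspace (laplacian E) lam) (axis u 1) \<noteq> 0}"

definition cmat_vec :: "real^'v^'v \<Rightarrow> complex^'v \<Rightarrow> complex^'v" where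
  "cmat_vec M v = (\<chi> i. \<Sum>j\<in>UNIV. complex_of_real (M $ i $ j) * v $ j)"

definition exp_itM :: "real \<Rightarrow> real^'v^'v \<Rightarrow> complex^'v \<Rightarrow> complex^'v" where
  "exp_itM t M v = (\<Sum>k. ((\<i> * complex_of_real t) ^ k / of_nat (fact k)) *s ((cmat_vec M ^^ k) v))"

definition lap_pst :: "('v::finite \<Rightarrow> 'v \<Rightarrow> bool) \<Rightarrow> 'v \<Rightarrow> 'v \<Rightarrow> real \<Rightarrow> bool" where
  "lap_pst E a b t \<longleftrightarrow> t > 0 \<and> (\<exists>\<gamma>::complex. exp_itM t (laplacian E) (axis a 1) = \<gamma> *s axis b 1)"

definition nu2 :: "int \<Rightarrow> nat" where
  "nu2 k = multiplicity (2::int) k"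

end

theory Submission
  imports Defs
begin

definition symm :: "real^'n^'n \<Rightarrow> bool" where
  "symm M \<longleftrightarrow> (\<forall>i j. M$i$j = M$j$i)"

lemma symm_inner:
  assumes "symm M" shows "(M *v x) \<bullet> y = x \<bullet> (M *v y)"
proof -
  have "(M *v x) \<bullet> y = (\<Sum>i\<in>UNIV. \<Sum>j\<in>UNIV. M$i$j * x$j * y$i)"
    by (simp add: inner_vec_def matrix_vector_mult_def sum_distrib_right)
  also have "\<dots> = (\<Sum>j\<in>UNIV. \<Sum>i\<in>UNIV. M$i$j * x$j * y$i)" by (rule sum.swap)
  also have "\<dots> = x \<bullet> (M *v y)"
    using assms by (simp add: symm_def inner_vec_def matrix_vector_mult_def sum_distrib_left mult_ac)
  finally show ?thesis .
qed

lemma subspace_eigenspace: "subspace (eigenspace M l)"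
  unfolding subspace_def eigenspace_def
  by (simp add: matrix_vector_right_distrib matrix_vector_mult_scaleR scaleR_right_distrib)

lemma orth_proj_unique:
  assumes "subspace S" "p \<in> S" "\<forall>y\<in>S. (x - p) \<bullet> y = 0"
  shows "orth_proj S x = p"
  unfolding orth_proj_def
proof (rule the_equality)
  show "p \<in> S \<and> (\<forall>y\<in>S. (x - p) \<bullet> y = 0)" using assms by blast
next
  fix q assume q: "q \<in> S \<and> (\<forall>y\<in>S. (x - q) \<bullet> y = 0)"
  have d: "p - q \<in> S" using assms q by (simp add: subspace_diff)
  have "(x - q) \<bullet> (p - q) - (x - p) \<bullet> (p - q) = 0" using q assms d by simp
  hence "(p - q) \<bullet> (p - q) = 0" by (simp add: inner_diff_left inner_diff_right inner_commute)
  thus "q = p" by simp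
qed

lemma orth_proj_exists:
  assumes "subspace S"
  shows "orth_proj S x \<in> S \<and> (\<forall>y\<in>S. (x - orth_proj S x) \<bullet> y = 0)"
proof -
  obtain y z where y: "y \<in> span S" and z: "\<And>w. w \<in> span S \<Longrightarrow> orthogonal z w" and xyz: "x = y + z"
    using orthogonal_subspace_decomp_exists by blast
  have yS: "y \<in> S" using y assms by (metis span_eq_iff)
  have "\<forall>w\<in>S. (x - y) \<bullet> w = 0" using z xyz by (simp add: orthogonal_def span_base)
  hence "orth_proj S x = y" using orth_proj_unique[OF assms yS] by blast
  thus ?thesis using yS \<open>\<forall>w\<in>S. (x - y) \<bullet> w = 0\<close> by simp
qed

lemma orth_proj_add:
  assumes "subspace S" shows "orth_proj S (x + y) = orth_proj S x + orth_proj S y"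
  using orth_proj_exists[OF assms, of x] orth_proj_exists[OF assms, of y]
  by (intro orth_proj_unique[OF assms]) (auto intro: subspace_add[OF assms] simp: inner_diff_left inner_add_left algebra_simps)

lemma orth_proj_scale:
  assumes "subspace S" shows "orth_proj S (c *\<^sub>R x) = c *\<^sub>R orth_proj S x"
proof -
  have e: "c *\<^sub>R x - c *\<^sub>R orth_proj S x = c *\<^sub>R (x - orth_proj S x)" by (simp add: algebra_simps)
  show ?thesis using orth_proj_exists[OF assms, of x]
    by (intro orth_proj_unique[OF assms]) (auto intro: subspace_scale[OF assms] simp: e)
qed

lemma orth_proj_sum:
  assumes "subspace S" "finite J" shows "orth_proj S (\<Sum>j\<in>J. f j) = (\<Sum>j\<in>J. orth_proj S (f j))"
  using assms(2) by induction (auto simp: orth_proj_add[OF assms(1)] orth_proj_unique[OF assms(1)] subspace_0[OF assms(1)])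

lemma eig_orth:
  assumes "symm M" "M *v x = a *\<^sub>R x" "M *v y = b *\<^sub>R y" "a \<noteq> b"
  shows "x \<bullet> y = 0"
proof -
  have "a * (x \<bullet> y) = b * (x \<bullet> y)"
    using symm_inner[OF assms(1), of x y] assms(2,3) by simp
  thus ?thesis using assms(4) by simp
qed

lemma orth_proj_eigvec:
  assumes "symm M" "M *v y = mu *\<^sub>R y"
  shows "orth_proj (eigenspace M l) y = (if mu = l then y else 0)"
proof (cases "mu = l")
  case True
  thus ?thesis using assms by (intro orth_proj_unique[OF subspace_eigenspace]) (auto simp: eigenspace_def)
next
  case False
  thus ?thesis using assms eig_orth[OF assms(1)]
    by (intro orth_proj_unique[OF subspace_eigenspace]) (auto simp: eigenspace_def)
qed

lemma eigvec_in_invariant: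
  fixes M :: "real^'n^'n"
  assumes sym: "symm M" and W: "subspace W" and inv: "\<forall>x\<in>W. M *v x \<in> W"
    and ne: "w0 \<in> W" "w0 \<noteq> 0"
  shows "\<exists>v\<in>W. v \<noteq> 0 \<and> M *v v = (v \<bullet> (M *v v)) *\<^sub>R v"
proof -
  define K where "K = W \<inter> sphere 0 1"
  have cK: "compact K" unfolding K_def
    by (intro closed_Int_compact closed_subspace[OF W] compact_sphere)
  have neK: "K \<noteq> {}"
  proof -
    have "(1 / norm w0) *\<^sub>R w0 \<in> K" using ne W unfolding K_def by (auto intro: subspace_scale)
    thus ?thesis by blast
  qed
  have coK: "continuous_on K (\<lambda>x. x \<bullet> (M *v x))"
    by (intro continuous_on_inner continuous_on_id linear_continuous_on) (simp add: linear_conv_bounded_linear[symmetric] matrix_vector_mul_linear)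
  obtain v where vK: "v \<in> K" and vmax: "\<And>y. y \<in> K \<Longrightarrow> y \<bullet> (M *v y) \<le> v \<bullet> (M *v v)"
    using continuous_attains_sup[OF cK neK coK] by blast
  define l where "l = v \<bullet> (M *v v)"
  have vW: "v \<in> W" and nv: "norm v = 1" using vK K_def by auto
  have vv: "v \<bullet> v = 1" using nv by (simp add: dot_square_norm)
  define w where "w = M *v v - l *\<^sub>R v"
  have wW: "w \<in> W" unfolding w_def using inv vW W by (auto intro: subspace_diff subspace_scale)
  have wv: "w \<bullet> v = 0"
  proof -
    have "w \<bullet> v = (M *v v) \<bullet> v - l * (v \<bullet> v)" unfolding w_def by (simp add: inner_diff_left)
    thus ?thesis using vv l_def by (simp add: inner_commute)
  qed
  have wMv: "w \<bullet> (M *v v) = w \<bullet> w"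
  proof -
    have "M *v v = w + l *\<^sub>R v" unfolding w_def by simp
    thus ?thesis using wv by (simp add: inner_add_right)
  qed
  have key: "2 * s * (w \<bullet> w) + s^2 * (w \<bullet> (M *v w) - l * (w \<bullet> w)) \<le> 0" for s
  proof -
    define x where "x = v + s *\<^sub>R w"
    have xx: "x \<bullet> x = 1 + s^2 * (w \<bullet> w)"
    proof -
      have "x \<bullet> x = v \<bullet> v + 2 * s * (w \<bullet> v) + s^2 * (w \<bullet> w)"
        unfolding x_def by (simp add: inner_add_left inner_add_right inner_commute[of v w] power2_eq_square algebra_simps)
      thus ?thesis using vv wv by simp
    qed
    have xpos: "x \<bullet> x > 0" using xx by (simp add: add_pos_nonneg)
    define y where "y = (1 / norm x) *\<^sub>R x"
    have nx: "norm x > 0" using xpos by (simp add: inner_gt_zero_iff)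
    have xW: "x \<in> W" using W vW wW by (simp add: x_def subspace_add subspace_scale)
    have "y \<in> K" unfolding y_def K_def
      using nx xW W by (auto intro: subspace_scale)
    hence "y \<bullet> (M *v y) \<le> l" using vmax l_def by blast
    moreover have "y \<bullet> (M *v y) = (x \<bullet> (M *v x)) / (x \<bullet> x)"
    proof -
      have "y \<bullet> (M *v y) = (1 / norm x)^2 * (x \<bullet> (M *v x))"
        unfolding y_def by (simp add: matrix_vector_mult_scaleR power2_eq_square)
      moreover have "x \<bullet> x = (norm x)^2" by (simp add: power2_norm_eq_inner)
      ultimately show ?thesis by (simp add: power_divide)
    qed
    ultimately have "x \<bullet> (M *v x) \<le> l * (x \<bullet> x)" using xpos by (simp add: divide_le_eq)
    moreover have "x \<bullet> (M *v x) = l + 2 * s * (w \<bullet> w) + s^2 * (w \<bullet> (M *v w))"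
    proof -
      have "x \<bullet> (M *v x) = v \<bullet> (M *v v) + s * (w \<bullet> (M *v v)) + s * (v \<bullet> (M *v w)) + s^2 * (w \<bullet> (M *v w))"
        unfolding x_def by (simp add: matrix_vector_right_distrib matrix_vector_mult_scaleR inner_add_left inner_add_right power2_eq_square algebra_simps)
      moreover have "v \<bullet> (M *v w) = w \<bullet> (M *v v)" using symm_inner[OF sym, of v w] by (simp add: inner_commute)
      ultimately show ?thesis using wMv l_def by simp
    qed
    ultimately show ?thesis using xx by (simp add: algebra_simps)
  qed
  have "w = 0"
  proof (rule ccontr)
    assume "w \<noteq> 0"
    hence a: "w \<bullet> w > 0" by simp
    define c where "c = \<bar>w \<bullet> (M *v w) - l * (w \<bullet> w)\<bar>"
    define s where "s = (w \<bullet> w) / (c + 1)"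
    have c0: "c \<ge> 0" unfolding c_def by simp
    have s0: "s > 0" unfolding s_def c_def using a by simp
    have "2 * s * (w \<bullet> w) + s^2 * (w \<bullet> (M *v w) - l * (w \<bullet> w)) \<ge> 2 * s * (w \<bullet> w) - s^2 * c"
    proof -
      have "\<bar>s^2 * (w \<bullet> (M *v w) - l * (w \<bullet> w))\<bar> = s^2 * c" unfolding c_def by (simp add: abs_mult)
      hence "s^2 * (w \<bullet> (M *v w) - l * (w \<bullet> w)) \<ge> - (s^2 * c)" by (smt (verit) abs_ge_minus_self)
      thus ?thesis by linarith
    qed
    moreover have "s^2 * c < s * (w \<bullet> w)"
    proof -
      have "s * c < w \<bullet> w" unfolding s_def c_def using a
        by (simp add: field_simps c0)
      thus ?thesis using s0 by (simp add: power2_eq_square mult.assoc)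
    qed
    moreover have "s * (w \<bullet> w) > 0" using s0 a by simp
    ultimately show False using key[of s] by linarith
  qed
  thus ?thesis using vW nv l_def unfolding w_def by (intro bexI[of _ v]) auto
qed

definition msupp :: "real^'n^'n \<Rightarrow> real^'n \<Rightarrow> real set" where
  "msupp M v = {l. (\<exists>x. x \<noteq> 0 \<and> M *v x = l *\<^sub>R x) \<and> orth_proj (eigenspace M l) v \<noteq> 0}"

lemma eig_support_msupp: "eig_support E u = msupp (laplacian E) (axis u 1)"
  unfolding eig_support_def msupp_def by simp

lemma span_eig_univ:
  fixes M :: "real^'n^'n"
  assumes sym: "symm M"
  shows "v \<in> span {x. \<exists>l. M *v x = l *\<^sub>R x}"
proof -
  define U where "U = span {x. \<exists>l. M *v x = l *\<^sub>R x}"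
  have Uinv: "M *v x \<in> U" if "x \<in> U" for x
  proof -
    have lin: "linear (\<lambda>x. M *v x)" by (rule matrix_vector_mul_linear)
    have "M *v x \<in> (\<lambda>x. M *v x) ` U" using that by blast
    hence "M *v x \<in> span ((\<lambda>x. M *v x) ` {x. \<exists>l. M *v x = l *\<^sub>R x})"
      unfolding U_def span_linear_image[OF lin] .
    moreover have "(\<lambda>x. M *v x) ` {x. \<exists>l. M *v x = l *\<^sub>R x} \<subseteq> U"
    proof
      fix y assume "y \<in> (\<lambda>x. M *v x) ` {x. \<exists>l. M *v x = l *\<^sub>R x}"
      then obtain x l where "M *v x = l *\<^sub>R x" "y = M *v x" by blast
      hence "y = l *\<^sub>R x" "x \<in> U" by (auto simp: U_def span_base)
      thus "y \<in> U" by (simp add: U_def span_scale)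
    qed
    moreover have "subspace U" unfolding U_def by (rule subspace_span)
    ultimately show ?thesis using span_minimal by blast
  qed
  obtain y z where y: "y \<in> span U" and z: "\<And>w. w \<in> span U \<Longrightarrow> orthogonal z w" and vyz: "v = y + z"
    using orthogonal_subspace_decomp_exists by blast
  define W where "W = {z. \<forall>w\<in>U. z \<bullet> w = 0}"
  have sW: "subspace W" unfolding W_def subspace_def by (auto simp: inner_add_left)
  have Winv: "\<forall>x\<in>W. M *v x \<in> W"
  proof
    fix x assume x: "x \<in> W"
    have "(M *v x) \<bullet> w = 0" if "w \<in> U" for w
      using symm_inner[OF sym, of x w] Uinv[OF that] x unfolding W_def by simp
    thus "M *v x \<in> W" unfolding W_def by blast
  qed
  have zW: "z \<in> W" using z unfolding W_def orthogonal_def by (simp add: span_base)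
  have "z = 0"
  proof (rule ccontr)
    assume "z \<noteq> 0"
    then obtain e where e: "e \<in> W" "e \<noteq> 0" "M *v e = (e \<bullet> (M *v e)) *\<^sub>R e"
      using eigvec_in_invariant[OF sym sW Winv zW] by blast
    hence "e \<in> U" unfolding U_def by (intro span_base) blast
    with e have "e \<bullet> e = 0" unfolding W_def by blast
    with e show False by simp
  qed
  thus ?thesis using y vyz U_def by (simp add: span_span)
qed

lemma decomp_exists:
  fixes M :: "real^'n^'n"
  assumes sym: "symm M"
  shows "\<exists>L f. finite L \<and> (\<forall>l. M *v f l = l *\<^sub>R f l) \<and> v = (\<Sum>l\<in>L. f l)"
  using span_eig_univ[OF sym, of v]
proof (induction rule: span_induct_alt)
  case base
  show ?case by (rule exI[of _ "{}"], rule exI[of _ "\<lambda>_. 0"]) simp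
next
  case (step c x y)
  then obtain l0 where x: "M *v x = l0 *\<^sub>R x" by blast
  from step obtain L f where L: "finite L" "\<forall>l. M *v f l = l *\<^sub>R f l" "y = (\<Sum>l\<in>L. f l)" by blast
  define g where "g l = (if l \<in> L then f l else 0) + (if l = l0 then c *\<^sub>R x else 0)" for l
  have "\<forall>l. M *v g l = l *\<^sub>R g l"
    using L(2) x by (simp add: g_def matrix_vector_right_distrib matrix_vector_mult_scaleR scaleR_right_distrib)
  moreover have "c *\<^sub>R x + y = (\<Sum>l\<in>insert l0 L. g l)"
  proof -
    have "(\<Sum>l\<in>insert l0 L. g l) = (\<Sum>l\<in>insert l0 L. if l \<in> L then f l else 0) + (\<Sum>l\<in>insert l0 L. if l = l0 then c *\<^sub>R x else 0)"
      unfolding g_def by (simp add: sum.distrib)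
    also have "(\<Sum>l\<in>insert l0 L. if l \<in> L then f l else 0) = (\<Sum>l\<in>L. f l)"
    proof -
      have "insert l0 L \<inter> L = L" by auto
      thus ?thesis using L(1) by (simp add: sum.If_cases)
    qed
    also have "(\<Sum>l\<in>insert l0 L. if l = l0 then c *\<^sub>R x else 0) = c *\<^sub>R x"
      using L(1) by (simp add: sum.delta)
    finally show ?thesis using L(3) by simp
  qed
  ultimately show ?case using L(1) by blast
qed

lemma proj_of_decomp:
  fixes M :: "real^'n^'n"
  assumes sym: "symm M" and fin: "finite J" and eig: "\<forall>j\<in>J. M *v y j = mu j *\<^sub>R y j"
  shows "orth_proj (eigenspace M l) (\<Sum>j\<in>J. y j) = (\<Sum>j\<in>{j\<in>J. mu j = l}. y j)"
proof -
  have "orth_proj (eigenspace M l) (\<Sum>j\<in>J. y j) = (\<Sum>j\<in>J. orth_proj (eigenspace M l) (y j))"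
    by (rule orth_proj_sum[OF subspace_eigenspace fin])
  also have "\<dots> = (\<Sum>j\<in>J. if mu j = l then y j else 0)"
    using eig orth_proj_eigvec[OF sym] by (intro sum.cong) auto
  also have "\<dots> = (\<Sum>j\<in>{j\<in>J. mu j = l}. y j)"
    using fin by (simp add: sum.inter_filter)
  finally show ?thesis .
qed

lemma spectral_decomp:
  fixes M :: "real^'n^'n"
  assumes sym: "symm M"
  shows "finite (msupp M v) \<and> v = (\<Sum>l\<in>msupp M v. orth_proj (eigenspace M l) v)
     \<and> (\<forall>l. M *v orth_proj (eigenspace M l) v = l *\<^sub>R orth_proj (eigenspace M l) v)"
proof -
  obtain L f where L: "finite L" "\<forall>l. M *v f l = l *\<^sub>R f l" "v = (\<Sum>l\<in>L. f l)"
    using decomp_exists[OF sym] by blast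
  have P: "orth_proj (eigenspace M l) v = (if l \<in> L then f l else 0)" for l
  proof -
    have "orth_proj (eigenspace M l) v = (\<Sum>j\<in>{j\<in>L. j = l}. f j)"
      using proj_of_decomp[OF sym L(1), of f "\<lambda>j. j"] L by simp
    also have "\<dots> = (if l \<in> L then f l else 0)"
    proof -
      have "{j\<in>L. j = l} = (if l \<in> L then {l} else {})" by auto
      thus ?thesis by simp
    qed
    finally show ?thesis .
  qed
  have S: "msupp M v = {l\<in>L. f l \<noteq> 0}"
    unfolding msupp_def P using L(2) by auto
  have fin: "finite (msupp M v)" using S L(1) by simp
  have "(\<Sum>l\<in>msupp M v. orth_proj (eigenspace M l) v) = (\<Sum>l\<in>L. f l)"
    unfolding S P using L(1) by (intro sum.mono_neutral_cong_left) auto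
  moreover have "\<forall>l. M *v orth_proj (eigenspace M l) v = l *\<^sub>R orth_proj (eigenspace M l) v"
    using orth_proj_exists[OF subspace_eigenspace] unfolding eigenspace_def by blast
  ultimately show ?thesis using fin L(3) by simp
qed

definition cvec :: "real^'n \<Rightarrow> complex^'n" where
  "cvec x = (\<chi> i. complex_of_real (x$i))"

lemma cvec_nth[simp]: "cvec x $ i = complex_of_real (x $ i)"
  by (simp add: cvec_def)

lemma cmat_vec_sum: "cmat_vec M (\<Sum>j\<in>J. w j) = (\<Sum>j\<in>J. cmat_vec M (w j))"
  apply (simp add: vec_eq_iff cmat_vec_def sum_component sum_distrib_left)
  apply (rule allI) by (rule sum.swap)

lemma cmat_vec_scale: "cmat_vec M (c *s w) = c *s cmat_vec M w"
  by (simp add: vec_eq_iff cmat_vec_def sum_distrib_left mult_ac)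

lemma cmat_vec_cvec: "cmat_vec M (cvec x) = cvec (M *v x)"
  by (simp add: vec_eq_iff cmat_vec_def matrix_vector_mult_def)

lemma pow_combo:
  assumes "\<forall>j\<in>J. M *v x j = lam j *\<^sub>R x j"
  shows "(cmat_vec M ^^ k) (\<Sum>j\<in>J. c j *s cvec (x j)) = (\<Sum>j\<in>J. (c j * complex_of_real (lam j) ^ k) *s cvec (x j))"
proof (induction k)
  case 0
  then show ?case by simp
next
  case (Suc k)
  have "(cmat_vec M ^^ Suc k) (\<Sum>j\<in>J. c j *s cvec (x j))
      = (\<Sum>j\<in>J. (c j * complex_of_real (lam j) ^ k) *s cmat_vec M (cvec (x j)))"
    using Suc by (simp add: cmat_vec_sum cmat_vec_scale)
  also have "\<dots> = (\<Sum>j\<in>J. (c j * complex_of_real (lam j) ^ Suc k) *s cvec (x j))"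
    using assms by (intro sum.cong) (auto simp: cmat_vec_cvec vec_eq_iff mult_ac)
  finally show ?case .
qed

lemma vec_sums:
  fixes g :: "nat \<Rightarrow> 'a::real_normed_vector^'n"
  assumes "\<And>i. (\<lambda>k. g k $ i) sums (a $ i)"
  shows "g sums a"
  using assms unfolding sums_def by (intro vec_tendstoI) (simp add: sum_component)

lemma exp_combo:
  fixes M :: "real^'n^'n"
  assumes fin: "finite J" and eig: "\<forall>j\<in>J. M *v x j = lam j *\<^sub>R x j"
  shows "exp_itM t M (\<Sum>j\<in>J. c j *s cvec (x j))
       = (\<Sum>j\<in>J. (c j * exp (\<i> * complex_of_real (t * lam j))) *s cvec (x j))"
proof -
  have trm: "((\<i> * complex_of_real t) ^ k / of_nat (fact k)) *s ((cmat_vec M ^^ k) (\<Sum>j\<in>J. c j *s cvec (x j)))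
     = (\<Sum>j\<in>J. (c j * ((\<i> * complex_of_real (t * lam j)) ^ k /\<^sub>R fact k)) *s cvec (x j))" for k
    unfolding pow_combo[OF eig]
    by (simp add: vec_eq_iff sum_component sum_distrib_left scaleR_conv_of_real power_mult_distrib mult_ac divide_inverse)
  have "(\<lambda>k. \<Sum>j\<in>J. (c j * ((\<i> * complex_of_real (t * lam j)) ^ k /\<^sub>R fact k)) *s cvec (x j))
      sums (\<Sum>j\<in>J. (c j * exp (\<i> * complex_of_real (t * lam j))) *s cvec (x j))"
  proof (rule sums_sum)
    fix j assume "j \<in> J"
    show "(\<lambda>k. (c j * ((\<i> * complex_of_real (t * lam j)) ^ k /\<^sub>R fact k)) *s cvec (x j))
        sums ((c j * exp (\<i> * complex_of_real (t * lam j))) *s cvec (x j))"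
    proof (rule vec_sums)
      fix i
      let ?z = "\<i> * complex_of_real (t * lam j)"
      have "(\<lambda>k. c j * (?z ^ k /\<^sub>R fact k) * complex_of_real (x j $ i)) sums (c j * exp ?z * complex_of_real (x j $ i))"
        by (intro sums_mult sums_mult2 exp_converges)
      thus "(\<lambda>k. ((c j * (?z ^ k /\<^sub>R fact k)) *s cvec (x j)) $ i) sums (((c j * exp ?z) *s cvec (x j)) $ i)"
        by simp
    qed
  qed
  thus ?thesis unfolding exp_itM_def trm by (rule sums_unique[symmetric])
qed

lemma degree_sum:
  fixes E :: "'v::finite \<Rightarrow> 'v \<Rightarrow> bool"
  shows "real (degree E i) = (\<Sum>j\<in>UNIV. if E i j then 1 else 0)"
proof -
  have "(\<Sum>j\<in>UNIV. if E i j then 1 else (0::real)) = (\<Sum>j\<in>{j. E i j}. 1)"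
    by (simp add: sum.If_cases Collect_conv_if)
  thus ?thesis by (simp add: degree_def)
qed

lemma lap_mult:
  fixes E :: "'v::finite \<Rightarrow> 'v \<Rightarrow> bool"
  shows "(laplacian E *v x) $ i = real (degree E i) * x$i - (\<Sum>j\<in>UNIV. if E i j then x$j else 0)"
proof -
  have "(laplacian E *v x) $ i = (\<Sum>j\<in>UNIV. (if i = j then real (degree E i) * x$j else 0) - (if E i j then x$j else 0))"
    unfolding matrix_vector_mult_def vec_lambda_beta by (intro sum.cong refl) (simp add: laplacian_def left_diff_distrib)
  also have "\<dots> = real (degree E i) * x$i - (\<Sum>j\<in>UNIV. if E i j then x$j else 0)"
    by (simp add: sum_subtractf)
  finally show ?thesis .
qed

lemma symm_lap:
  assumes "simple_graph E" shows "symm (laplacian E)"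
  using assms unfolding symm_def laplacian_def simple_graph_def by auto

lemma quad_form:
  fixes E :: "'v::finite \<Rightarrow> 'v \<Rightarrow> bool"
  assumes sg: "simple_graph E"
  shows "2 * (x \<bullet> (laplacian E *v x)) = (\<Sum>a\<in>UNIV. \<Sum>b\<in>UNIV. if E a b then (x$a - x$b)^2 else 0)"
proof -
  have sy: "E a b = E b a" for a b using sg unfolding simple_graph_def by blast
  define A where "A = (\<Sum>a\<in>UNIV. \<Sum>b\<in>UNIV. if E a b then x$a * x$a - x$a * x$b else 0)"
  have xL: "x \<bullet> (laplacian E *v x) = A"
  proof -
    have "x \<bullet> (laplacian E *v x) = (\<Sum>a\<in>UNIV. x$a * (real (degree E a) * x$a - (\<Sum>b\<in>UNIV. if E a b then x$b else 0)))"
      by (simp add: inner_vec_def lap_mult)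
    also have "\<dots> = A" unfolding A_def degree_sum
      by (intro sum.cong refl) (simp add: sum_distrib_left sum_distrib_right right_diff_distrib sum_subtractf[symmetric] if_distrib cong: if_cong)
    finally show ?thesis .
  qed
  have B: "(\<Sum>a\<in>UNIV. \<Sum>b\<in>UNIV. if E a b then x$b * x$b - x$b * x$a else 0) = A"
  proof -
    have "(\<Sum>a\<in>UNIV. \<Sum>b\<in>UNIV. if E a b then x$b * x$b - x$b * x$a else 0)
        = (\<Sum>b\<in>UNIV. \<Sum>a\<in>UNIV. if E a b then x$b * x$b - x$b * x$a else 0)" by (rule sum.swap)
    also have "\<dots> = A" unfolding A_def using sy by simp
    finally show ?thesis .
  qed
  have "(\<Sum>a\<in>UNIV. \<Sum>b\<in>UNIV. if E a b then (x$a - x$b)^2 else 0)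
      = (\<Sum>a\<in>UNIV. \<Sum>b\<in>UNIV. (if E a b then x$a * x$a - x$a * x$b else 0) + (if E a b then x$b * x$b - x$b * x$a else 0))"
    by (intro sum.cong refl) (simp add: power2_eq_square algebra_simps)
  also have "\<dots> = A + A" using B unfolding A_def by (simp add: sum.distrib)
  finally show ?thesis using xL by simp
qed

lemma lap_psd:
  fixes E :: "'v::finite \<Rightarrow> 'v \<Rightarrow> bool"
  assumes sg: "simple_graph E" and ev: "laplacian E *v x = l *\<^sub>R x" "x \<noteq> 0"
  shows "l \<ge> 0"
proof -
  have "2 * (x \<bullet> (laplacian E *v x)) \<ge> 0" unfolding quad_form[OF sg] by (intro sum_nonneg) auto
  hence "l * (x \<bullet> x) \<ge> 0" using ev by simp
  moreover have "x \<bullet> x > 0" using ev by simp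
  ultimately show ?thesis by (simp add: zero_le_mult_iff)
qed

lemma lap_kernel_edge:
  fixes E :: "'v::finite \<Rightarrow> 'v \<Rightarrow> bool"
  assumes sg: "simple_graph E" and k: "laplacian E *v x = 0" and e: "E a b"
  shows "x$a = x$b"
proof -
  have "(\<Sum>a\<in>UNIV. \<Sum>b\<in>UNIV. if E a b then (x$a - x$b)^2 else 0) = 0"
    unfolding quad_form[OF sg, symmetric] k by simp
  hence "\<forall>a\<in>UNIV. (\<Sum>b\<in>UNIV. if E a b then (x$a - x$b)^2 else 0) = 0"
    by (subst (asm) sum_nonneg_eq_0_iff) (auto intro: sum_nonneg)
  hence "\<forall>b\<in>UNIV. (if E a b then (x$a - x$b)^2 else 0) = 0"
    by (subst (asm) sum_nonneg_eq_0_iff) auto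
  hence "(x$a - x$b)^2 = 0" using e by (metis UNIV_I)
  thus ?thesis by simp
qed

lemma lap_kernel_path:
  fixes E :: "'v::finite \<Rightarrow> 'v \<Rightarrow> bool"
  assumes sg: "simple_graph E" and k: "laplacian E *v x = 0" and p: "E\<^sup>*\<^sup>* a b"
  shows "x$a = x$b"
  using p by induction (auto dest: lap_kernel_edge[OF sg k])

lemma lap_ones:
  fixes E :: "'v::finite \<Rightarrow> 'v \<Rightarrow> bool"
  shows "laplacian E *v (\<chi> i. 1) = 0"
  by (simp add: vec_eq_iff lap_mult degree_sum if_distrib cong: if_cong)

definition dup :: "real^'v \<Rightarrow> real^(bool \<times> 'v)" where
  "dup x = (\<chi> p. x $ snd p)"

definition anti :: "real^'v \<Rightarrow> real^(bool \<times> 'v)" where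
  "anti x = (\<chi> p. (if fst p then -1 else 1) * x $ snd p)"

lemma dup_nth[simp]: "dup x $ p = x $ snd p" by (simp add: dup_def)
lemma anti_nth[simp]: "anti x $ p = (if fst p then -1 else 1) * x $ snd p" by (simp add: anti_def)

lemma if_neg0: "(if P then - a else 0) = - (if P then a else (0::real))" by simp

lemma sum_bool_prod:
  fixes f :: "bool \<times> 'v::finite \<Rightarrow> 'b::comm_monoid_add"
  shows "(\<Sum>q\<in>UNIV. f q) = (\<Sum>b\<in>UNIV. f (True, b)) + (\<Sum>b\<in>UNIV. f (False, b))"
proof -
  have "(\<Sum>q\<in>UNIV. f q) = (\<Sum>q\<in>(UNIV::bool set) \<times> (UNIV::'v set). f q)" by (simp add: UNIV_Times_UNIV)
  also have "\<dots> = (\<Sum>l\<in>UNIV. \<Sum>b\<in>UNIV. f (l, b))" by (simp add: sum.cartesian_product split_def)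
  also have "\<dots> = (\<Sum>b\<in>UNIV. f (True, b)) + (\<Sum>b\<in>UNIV. f (False, b))" by (simp add: UNIV_bool add.commute)
  finally show ?thesis .
qed

lemma degree_blowup:
  fixes X :: "'v::finite \<Rightarrow> 'v \<Rightarrow> bool"
  shows "degree (blowup2 X) p = 2 * degree X (snd p)"
proof -
  have "{q. blowup2 X p q} = UNIV \<times> {v. X (snd p) v}" by (auto simp: blowup2_def)
  thus ?thesis by (simp add: degree_def card_cartesian_product)
qed

lemma blowup_dup:
  fixes X :: "'v::finite \<Rightarrow> 'v \<Rightarrow> bool"
  assumes "laplacian X *v x = l *\<^sub>R x"
  shows "laplacian (blowup2 X) *v dup x = (2 * l) *\<^sub>R dup x"
proof -
  have "(laplacian (blowup2 X) *v dup x) $ p = 2 * (laplacian X *v x) $ snd p" for p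
    unfolding lap_mult degree_blowup sum_bool_prod
    by (simp add: blowup2_def algebra_simps cong: if_cong)
  thus ?thesis using assms by (simp add: vec_eq_iff dup_def)
qed

lemma blowup_anti:
  fixes X :: "'v::finite \<Rightarrow> 'v \<Rightarrow> bool"
  shows "laplacian (blowup2 X) *v anti (axis u 1) = (2 * real (degree X u)) *\<^sub>R anti (axis u 1)"
proof -
  have "(laplacian (blowup2 X) *v anti (axis u 1)) $ p = 2 * real (degree X (snd p)) * (anti (axis u 1)) $ p" for p
    unfolding lap_mult degree_blowup sum_bool_prod
    by (simp add: blowup2_def if_neg0 sum_negf cong: if_cong)
  thus ?thesis by (simp add: vec_eq_iff anti_def axis_def)
qed

lemma sum_insert_None_Some:
  assumes "finite S"
  shows "(\<Sum>j\<in>insert None (Some ` S). g j) = g None + (\<Sum>m\<in>S. g (Some m))"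
proof -
  have "None \<notin> Some ` S" by auto
  hence "(\<Sum>j\<in>insert None (Some ` S). g j) = g None + (\<Sum>j\<in>Some ` S. g j)"
    using assms by simp
  also have "(\<Sum>j\<in>Some ` S. g j) = (\<Sum>m\<in>S. g (Some m))"
    by (subst sum.reindex) (auto simp: inj_on_def)
  finally show ?thesis .
qed

lemma blowup_pst:
  fixes X :: "'v::finite \<Rightarrow> 'v \<Rightarrow> bool"
  assumes sg: "simple_graph X"
  shows "lap_pst (blowup2 X) (False, u) (True, u) t \<longleftrightarrow>
     t > 0 \<and> (\<forall>m\<in>msupp (laplacian X) (axis u 1).
        exp (\<i> * complex_of_real (2 * t * m)) = - exp (\<i> * complex_of_real (2 * t * real (degree X u))))"
proof -
  define S where "S = msupp (laplacian X) (axis u 1)"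
  define Y where "Y m = orth_proj (eigenspace (laplacian X) m) (axis u (1::real))" for m
  define d where "d = real (degree X u)"
  define \<omega> where "\<omega> = exp (\<i> * complex_of_real (2 * t * d))"
  define e where "e m = exp (\<i> * complex_of_real (2 * t * m))" for m
  have sym: "symm (laplacian X)" by (rule symm_lap[OF sg])
  from spectral_decomp[OF sym, of "axis u 1"]
  have finS: "finite S" and dec: "axis u 1 = (\<Sum>m\<in>S. Y m)"
    and eigY: "\<And>m. laplacian X *v Y m = m *\<^sub>R Y m"
    unfolding S_def Y_def by auto
  have Ynz: "Y m \<noteq> 0" if "m \<in> S" for m using that unfolding S_def Y_def msupp_def by blast
  have decc: "(\<Sum>m\<in>S. Y m $ a) = (if a = u then 1 else 0)" for a
  proof -
    have "(axis u (1::real)) $ a = (\<Sum>m\<in>S. Y m) $ a" using dec by simp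
    thus ?thesis by (simp add: sum_component axis_def)
  qed
  define xv where "xv j = (case j of None \<Rightarrow> anti (axis u 1) | Some m \<Rightarrow> dup (Y m))" for j
  define lam where "lam j = (case j of None \<Rightarrow> 2 * d | Some m \<Rightarrow> 2 * m)" for j
  define J where "J = insert None (Some ` S)"
  have finJ: "finite J" using finS J_def by simp
  have eigJ: "\<forall>j\<in>J. laplacian (blowup2 X) *v xv j = lam j *\<^sub>R xv j"
    using eigY blowup_anti[of X u] blowup_dup[of X] unfolding J_def xv_def lam_def d_def by auto
  have start: "(axis (False, u) (1::complex)) = (\<Sum>j\<in>J. (1/2) *s cvec (xv j))"
  proof -
    have "(\<Sum>j\<in>J. (1/2) *s cvec (xv j)) $ p = (axis (False, u) (1::complex)) $ p" for p
    proof -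
      obtain l a where p: "p = (l, a)" by fastforce
      have "(\<Sum>j\<in>J. (1/2) *s cvec (xv j)) $ p = (1/2) * complex_of_real ((if l then -1 else 1) * (if a = u then 1 else 0))
          + (1/2) * complex_of_real (\<Sum>m\<in>S. Y m $ a)"
        unfolding J_def sum_component sum_insert_None_Some[OF finS] by (simp add: xv_def p sum_distrib_left axis_def)
      thus ?thesis unfolding decc by (simp add: p axis_def)
    qed
    thus ?thesis by (simp add: vec_eq_iff)
  qed
  have expv: "exp_itM t (laplacian (blowup2 X)) (axis (False, u) 1) $ (l, a)
      = (1/2) * \<omega> * complex_of_real ((if l then -1 else 1) * (if a = u then 1 else 0))
        + (\<Sum>m\<in>S. (1/2) * e m * complex_of_real (Y m $ a))" for l a
  proof -
    have "exp_itM t (laplacian (blowup2 X)) (axis (False, u) 1) = (\<Sum>j\<in>J. (1/2 * exp (\<i> * complex_of_real (t * lam j))) *s cvec (xv j))"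
      unfolding start by (rule exp_combo[OF finJ eigJ])
    thus ?thesis unfolding J_def sum_component sum_insert_None_Some[OF finS]
      by (simp add: xv_def lam_def \<omega>_def e_def axis_def mult_ac)
  qed
  have ax: "(\<gamma> *s axis (True, u) (1::complex)) $ (l, a) = (if l \<and> a = u then \<gamma> else 0)" for \<gamma> l a
    by (simp add: axis_def)
  show ?thesis
  proof
    assume pst: "lap_pst (blowup2 X) (False, u) (True, u) t"
    then obtain \<gamma> where t0: "t > 0" and g: "exp_itM t (laplacian (blowup2 X)) (axis (False, u) 1) = \<gamma> *s axis (True, u) 1"
      unfolding lap_pst_def by blast
    have F0: "(1/2) * \<omega> * complex_of_real (if a = u then 1 else 0) + (\<Sum>m\<in>S. (1/2) * e m * complex_of_real (Y m $ a)) = 0" for a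
      using arg_cong[OF g, of "\<lambda>v. v $ (False, a)"] unfolding expv ax by simp
    have F1: "(\<Sum>m\<in>S. (\<omega> + e m) * complex_of_real (Y m $ a)) = 0" for a
    proof -
      have "complex_of_real (if a = u then 1 else 0) = (\<Sum>m\<in>S. complex_of_real (Y m $ a))"
        unfolding decc[symmetric] by simp
      hence "(1/2) * ((\<Sum>m\<in>S. \<omega> * complex_of_real (Y m $ a)) + (\<Sum>m\<in>S. e m * complex_of_real (Y m $ a))) = 0"
        using F0[of a] by (simp add: sum_distrib_left distrib_left mult_ac)
      thus ?thesis by (simp add: distrib_right sum.distrib)
    qed
    have "\<forall>m\<in>S. e m = - \<omega>"
    proof
      fix n assume n: "n \<in> S"
      have "0 = (\<Sum>a\<in>UNIV. (\<Sum>m\<in>S. (\<omega> + e m) * complex_of_real (Y m $ a)) * complex_of_real (Y n $ a))"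
        using F1 by simp
      also have "\<dots> = (\<Sum>a\<in>UNIV. \<Sum>m\<in>S. (\<omega> + e m) * (complex_of_real (Y m $ a) * complex_of_real (Y n $ a)))"
        by (simp add: sum_distrib_right mult.assoc)
      also have "\<dots> = (\<Sum>m\<in>S. \<Sum>a\<in>UNIV. (\<omega> + e m) * (complex_of_real (Y m $ a) * complex_of_real (Y n $ a)))"
        by (rule sum.swap)
      also have "\<dots> = (\<Sum>m\<in>S. (\<omega> + e m) * complex_of_real (Y m \<bullet> Y n))"
        unfolding inner_vec_def inner_real_def of_real_sum of_real_mult sum_distrib_left ..
      also have "\<dots> = (\<Sum>m\<in>S. if m = n then (\<omega> + e n) * complex_of_real (Y n \<bullet> Y n) else 0)"
        using eig_orth[OF sym eigY eigY] by (intro sum.cong) auto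
      also have "\<dots> = (\<omega> + e n) * complex_of_real (Y n \<bullet> Y n)"
        using finS n by simp
      finally have "(\<omega> + e n) * complex_of_real (Y n \<bullet> Y n) = 0" by simp
      moreover have "Y n \<bullet> Y n \<noteq> 0" using Ynz[OF n] by simp
      ultimately have "\<omega> + e n = 0" by simp
      thus "e n = - \<omega>" by (simp add: add_eq_0_iff)
    qed
    thus "t > 0 \<and> (\<forall>m\<in>msupp (laplacian X) (axis u 1).
        exp (\<i> * complex_of_real (2 * t * m)) = - exp (\<i> * complex_of_real (2 * t * real (degree X u))))"
      using t0 unfolding S_def e_def \<omega>_def d_def by blast
  next
    assume "t > 0 \<and> (\<forall>m\<in>msupp (laplacian X) (axis u 1).
        exp (\<i> * complex_of_real (2 * t * m)) = - exp (\<i> * complex_of_real (2 * t * real (degree X u))))"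
    hence t0: "t > 0" and ee: "\<forall>m\<in>S. e m = - \<omega>" unfolding S_def e_def \<omega>_def d_def by auto
    have "exp_itM t (laplacian (blowup2 X)) (axis (False, u) 1) $ (l, a) = ((- \<omega>) *s axis (True, u) 1) $ (l, a)" for l a
    proof -
      have "(\<Sum>m\<in>S. (1/2) * e m * complex_of_real (Y m $ a)) = (1/2) * (- \<omega>) * (\<Sum>m\<in>S. complex_of_real (Y m $ a))"
        using ee by (simp add: sum_distrib_left)
      also have "\<dots> = (1/2) * (- \<omega>) * complex_of_real (if a = u then 1 else 0)"
        unfolding decc[symmetric] by simp
      finally show ?thesis unfolding expv ax by (auto simp: algebra_simps)
    qed
    hence "exp_itM t (laplacian (blowup2 X)) (axis (False, u) 1) = (- \<omega>) *s axis (True, u) 1"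
      by (simp add: vec_eq_iff split_paired_all)
    thus "lap_pst (blowup2 X) (False, u) (True, u) t" unfolding lap_pst_def using t0 by blast
  qed
qed

lemma sum_UNIV_Plus:
  fixes f :: "'a::finite + 'b::finite \<Rightarrow> 'c::comm_monoid_add"
  shows "(\<Sum>i\<in>UNIV. f i) = (\<Sum>a\<in>UNIV. f (Inl a)) + (\<Sum>b\<in>UNIV. f (Inr b))"
proof -
  have "(\<Sum>i\<in>UNIV. f i) = (\<Sum>i\<in>UNIV <+> UNIV. f i)" by simp
  also have "\<dots> = (\<Sum>a\<in>UNIV. f (Inl a)) + (\<Sum>b\<in>UNIV. f (Inr b))"
    by (subst sum.Plus) (simp_all add: comp_def)
  finally show ?thesis .
qed

lemma sg_join:
  assumes "simple_graph G" "simple_graph H"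
  shows "simple_graph (graph_join G H)"
  unfolding simple_graph_def
proof (intro conjI allI impI)
  fix x y assume "graph_join G H x y"
  thus "graph_join G H y x" using assms unfolding simple_graph_def
    by (cases x; cases y) auto
next
  fix x show "\<not> graph_join G H x x" using assms unfolding simple_graph_def by (cases x) auto
qed

lemma degree_join_Inl:
  fixes G :: "'a::finite \<Rightarrow> 'a \<Rightarrow> bool" and H :: "'b::finite \<Rightarrow> 'b \<Rightarrow> bool"
  shows "degree (graph_join G H) (Inl a) = degree G a + CARD('b)"
proof -
  have "{v. graph_join G H (Inl a) v} = Inl ` {x. G a x} \<union> Inr ` UNIV"
    by (auto elim: graph_join.elims)
  hence "{v. graph_join G H (Inl a) v} = {x. G a x} <+> (UNIV::'b set)" by auto
  thus ?thesis by (simp add: degree_def card_Plus)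
qed

lemma degree_join_Inr:
  fixes G :: "'a::finite \<Rightarrow> 'a \<Rightarrow> bool" and H :: "'b::finite \<Rightarrow> 'b \<Rightarrow> bool"
  shows "degree (graph_join G H) (Inr b) = degree H b + CARD('a)"
proof -
  have "{v. graph_join G H (Inr b) v} = (UNIV::'a set) <+> {x. H b x}"
    by (auto elim: graph_join.elims)
  thus ?thesis by (simp add: degree_def card_Plus)
qed

definition lft :: "real^('a::finite + 'b::finite) \<Rightarrow> real^'a" where "lft x = (\<chi> a. x $ Inl a)"
definition rgt :: "real^('a::finite + 'b::finite) \<Rightarrow> real^'b" where "rgt x = (\<chi> b. x $ Inr b)"

lemma lap_join_Inl:
  fixes G :: "'a::finite \<Rightarrow> 'a \<Rightarrow> bool" and H :: "'b::finite \<Rightarrow> 'b \<Rightarrow> bool"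
  shows "(laplacian (graph_join G H) *v x) $ Inl a
     = (laplacian G *v lft x) $ a + real CARD('b) * x $ Inl a - (\<Sum>b\<in>UNIV. x $ Inr b)"
  unfolding lap_mult sum_UNIV_Plus degree_join_Inl by (simp add: lft_def algebra_simps cong: if_cong)

lemma lap_join_Inr:
  fixes G :: "'a::finite \<Rightarrow> 'a \<Rightarrow> bool" and H :: "'b::finite \<Rightarrow> 'b \<Rightarrow> bool"
  shows "(laplacian (graph_join G H) *v x) $ Inr b
     = (laplacian H *v rgt x) $ b + real CARD('a) * x $ Inr b - (\<Sum>a\<in>UNIV. x $ Inl a)"
  unfolding lap_mult sum_UNIV_Plus degree_join_Inr by (simp add: rgt_def algebra_simps cong: if_cong)

definition ext :: "real^('a::finite) \<Rightarrow> real^('a + 'b::finite)" where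
  "ext y = (\<chi> i. case i of Inl a \<Rightarrow> y $ a | Inr b \<Rightarrow> 0)"

lemma ext_Inl[simp]: "ext y $ Inl a = y $ a" and ext_Inr[simp]: "ext y $ Inr b = 0"
  by (simp_all add: ext_def)

lemma ext_eig:
  fixes G :: "'a::finite \<Rightarrow> 'a \<Rightarrow> bool" and H :: "'b::finite \<Rightarrow> 'b \<Rightarrow> bool"
  assumes "laplacian G *v y = k *\<^sub>R y" "(\<Sum>a\<in>UNIV. y $ a) = 0"
  shows "laplacian (graph_join G H) *v (ext y :: real^('a+'b)) = (k + real CARD('b)) *\<^sub>R ext y"
proof -
  have l: "lft (ext y :: real^('a+'b)) = y" by (simp add: lft_def vec_eq_iff)
  have r: "rgt (ext y :: real^('a+'b)) = 0" by (simp add: rgt_def vec_eq_iff)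
  show ?thesis
  proof (subst vec_eq_iff, intro allI)
    fix i :: "'a + 'b"
    show "(laplacian (graph_join G H) *v ext y) $ i = ((k + real CARD('b)) *\<^sub>R ext y) $ i"
      using assms by (cases i) (simp_all add: lap_join_Inl lap_join_Inr l r algebra_simps)
  qed
qed

definition wvec :: "real^('a::finite + 'b::finite)" where
  "wvec = (\<chi> i. case i of Inl a \<Rightarrow> real CARD('b) | Inr b \<Rightarrow> - real CARD('a))"

lemma wvec_eig:
  fixes G :: "'a::finite \<Rightarrow> 'a \<Rightarrow> bool" and H :: "'b::finite \<Rightarrow> 'b \<Rightarrow> bool"
  shows "laplacian (graph_join G H) *v (wvec :: real^('a+'b)) = (real CARD('a) + real CARD('b)) *\<^sub>R wvec"
proof -
  have l: "lft (wvec :: real^('a+'b)) = real CARD('b) *\<^sub>R (\<chi> i. 1)" by (simp add: lft_def wvec_def vec_eq_iff)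
  have r: "rgt (wvec :: real^('a+'b)) = (- real CARD('a)) *\<^sub>R (\<chi> i. 1)" by (simp add: rgt_def wvec_def vec_eq_iff)
  have lg: "laplacian G *v lft (wvec :: real^('a+'b)) = 0" unfolding l
    by (simp add: matrix_vector_mult_scaleR lap_ones)
  have lh: "laplacian H *v rgt (wvec :: real^('a+'b)) = 0"
    by (simp only: r matrix_vector_mult_scaleR lap_ones scaleR_zero_right)
  show ?thesis
  proof (subst vec_eq_iff, intro allI)
    fix i :: "'a + 'b"
    show "(laplacian (graph_join G H) *v wvec) $ i = ((real CARD('a) + real CARD('b)) *\<^sub>R wvec) $ i"
      apply (cases i) apply (simp_all add: lap_join_Inl lap_join_Inr lg lh)
      by (simp_all add: wvec_def algebra_simps)
  qed
qed

lemma msupp_alt: "msupp M v = {l. orth_proj (eigenspace M l) v \<noteq> 0}"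
  unfolding msupp_def using orth_proj_exists[OF subspace_eigenspace, of M _ v]
  unfolding eigenspace_def by blast

lemma inner_ones: "x \<bullet> (\<chi> i. 1) = (\<Sum>i\<in>UNIV. x $ i)"
  by (simp add: inner_vec_def)

locale gctx =
  fixes G :: "'a::finite \<Rightarrow> 'a \<Rightarrow> bool" and u :: 'a
  assumes sg: "simple_graph G"
begin

definition Y :: "real \<Rightarrow> real^'a" where
  "Y k = orth_proj (eigenspace (laplacian G) k) (axis u 1)"

definition Lam :: "real set" where "Lam = msupp (laplacian G) (axis u 1)"

definition ones :: "real^'a" where "ones = (\<chi> i. 1)"

definition z :: "real^'a" where "z = Y 0 - (1 / real CARD('a)) *\<^sub>R ones"

lemma symG: "symm (laplacian G)" by (rule symm_lap[OF sg])

lemma eigY: "laplacian G *v Y k = k *\<^sub>R Y k"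
  using spectral_decomp[OF symG, of "axis u 1"] unfolding Y_def by blast

lemma finLam: "finite Lam" and decG: "axis u 1 = (\<Sum>k\<in>Lam. Y k)"
  using spectral_decomp[OF symG, of "axis u 1"] unfolding Y_def Lam_def by auto

lemma Y_nz_iff: "Y k \<noteq> 0 \<longleftrightarrow> k \<in> Lam"
  unfolding Lam_def msupp_alt Y_def by simp

lemma ones_eig: "laplacian G *v ones = 0 *\<^sub>R ones"
  using lap_ones[of G] unfolding ones_def by simp

lemma sumY0: "(\<Sum>a\<in>UNIV. Y 0 $ a) = 1"
proof -
  have "ones \<in> eigenspace (laplacian G) 0" using ones_eig unfolding eigenspace_def by simp
  hence "(axis u 1 - Y 0) \<bullet> ones = 0"
    using orth_proj_exists[OF subspace_eigenspace, of "laplacian G" 0 "axis u 1"] unfolding Y_def by blast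
  hence "(axis u 1) \<bullet> ones = Y 0 \<bullet> ones" by (simp add: inner_diff_left)
  moreover have "(axis u (1::real)) \<bullet> ones = 1" unfolding ones_def inner_ones by (simp add: axis_def)
  ultimately show ?thesis unfolding ones_def inner_ones by simp
qed

lemma sumYk: "k \<noteq> 0 \<Longrightarrow> (\<Sum>a\<in>UNIV. Y k $ a) = 0"
  using eig_orth[OF symG eigY ones_eig] unfolding ones_def inner_ones by simp

lemma zero_in_Lam: "0 \<in> Lam"
proof -
  have "Y 0 \<noteq> 0" using sumY0 by auto
  thus ?thesis using Y_nz_iff by blast
qed

lemma Lam_nonneg: "k \<in> Lam \<Longrightarrow> k \<ge> 0"
  using lap_psd[OF sg eigY] Y_nz_iff by blast

lemma z_eig: "laplacian G *v z = 0 *\<^sub>R z"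
  using eigY[of 0] ones_eig unfolding z_def by (simp add: matrix_vector_mult_diff_distrib matrix_vector_mult_scaleR)

lemma sum_z: "(\<Sum>a\<in>UNIV. z $ a) = 0"
proof -
  have "(\<Sum>a\<in>UNIV. z $ a) = (\<Sum>a\<in>UNIV. Y 0 $ a) - (\<Sum>a\<in>(UNIV::'a set). 1 / real CARD('a))"
    unfolding z_def ones_def by (simp add: sum_subtractf)
  thus ?thesis using sumY0 by simp
qed

lemma z_zero_iff: "z = 0 \<longleftrightarrow> connected_graph G"
proof
  assume c: "connected_graph G"
  have kz: "laplacian G *v z = 0" using z_eig by simp
  have "z $ a = z $ u" for a using lap_kernel_path[OF sg kz] c unfolding connected_graph_def by blast
  hence "(\<Sum>a\<in>UNIV. z $ a) = (\<Sum>a\<in>(UNIV::'a set). z $ u)" by (intro sum.cong) auto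
  hence "(\<Sum>a\<in>UNIV. z $ a) = real CARD('a) * z $ u" by simp
  hence "z $ u = 0" using sum_z by simp
  thus "z = 0" using \<open>\<And>a. z $ a = z $ u\<close> by (simp add: vec_eq_iff)
next
  assume z0: "z = 0"
  show "connected_graph G"
  proof (rule ccontr)
    assume nc: "\<not> connected_graph G"
    have sy: "G a b \<Longrightarrow> G b a" for a b using sg unfolding simple_graph_def by blast
    define C where "C = {b. G\<^sup>*\<^sup>* u b}"
    define oc where "oc = (\<chi> b. if b \<in> C then 1 else (0::real))"
    have symr: "G\<^sup>*\<^sup>* a b \<Longrightarrow> G\<^sup>*\<^sup>* b a" for a b
    proof (induction rule: rtranclp_induct)
      case base thus ?case by simp
    next
      case (step y w) thus ?case using sy by (meson converse_rtranclp_into_rtranclp)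
    qed
    have "C \<noteq> UNIV"
    proof
      assume "C = UNIV"
      hence "G\<^sup>*\<^sup>* u x" for x unfolding C_def by blast
      hence "G\<^sup>*\<^sup>* x y" for x y using symr by (meson rtranclp_trans)
      thus False using nc unfolding connected_graph_def by blast
    qed
    hence cardC: "card C < CARD('a)" by (metis finite psubset_card_mono subset_UNIV psubsetI)
    have koc: "laplacian G *v oc = 0 *\<^sub>R oc"
    proof -
      have "(laplacian G *v oc) $ a = 0" for a
      proof (cases "a \<in> C")
        case True
        hence "\<forall>b. G a b \<longrightarrow> b \<in> C" unfolding C_def by (auto intro: rtranclp.rtrancl_into_rtrancl)
        hence "(\<Sum>b\<in>UNIV. if G a b then oc $ b else 0) = (\<Sum>b\<in>UNIV. if G a b then 1 else 0)"
          unfolding oc_def by (intro sum.cong) auto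
        thus ?thesis using True unfolding lap_mult degree_sum by (simp add: oc_def)
      next
        case False
        hence "\<forall>b. G a b \<longrightarrow> b \<notin> C" unfolding C_def using sy by (auto intro: rtranclp.rtrancl_into_rtrancl)
        hence "(\<Sum>b\<in>UNIV. if G a b then oc $ b else 0) = 0"
          unfolding oc_def by (intro sum.neutral) auto
        thus ?thesis using False unfolding lap_mult by (simp add: oc_def)
      qed
      thus ?thesis by (simp add: vec_eq_iff)
    qed
    have "oc \<in> eigenspace (laplacian G) 0" using koc unfolding eigenspace_def by simp
    hence "(axis u 1 - Y 0) \<bullet> oc = 0"
      using orth_proj_exists[OF subspace_eigenspace, of "laplacian G" 0 "axis u 1"] unfolding Y_def by blast
    moreover have "(axis u (1::real)) \<bullet> oc = 1" unfolding oc_def C_def by (simp add: inner_axis')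
    ultimately have y0oc: "Y 0 \<bullet> oc = 1" by (simp add: inner_diff_left)
    have "Y 0 = (1 / real CARD('a)) *\<^sub>R ones" using z0 unfolding z_def by simp
    hence "Y 0 \<bullet> oc = (1 / real CARD('a)) * real (card C)"
      unfolding ones_def oc_def by (simp add: inner_vec_def sum_divide_distrib[symmetric] sum.If_cases)
    hence "real (card C) = real CARD('a)" using y0oc by (simp add: field_simps)
    thus False using cardC by simp
  qed
qed

end

lemma if_ext_Inr[simp]: "(if P then (ext y :: real^('a::finite + 'b::finite)) else 0) $ Inr b = 0"
  by simp

lemma ext_zero_iff: "(ext y :: real^('a::finite + 'b::finite)) = 0 \<longleftrightarrow> y = 0"
proof
  assume "(ext y :: real^('a + 'b)) = 0"
  hence "(ext y :: real^('a + 'b)) $ Inl a = 0" for a by simp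
  thus "y = 0" by (simp add: vec_eq_iff)
qed (simp add: vec_eq_iff ext_def split: sum.split)

context gctx begin

lemma join_supp:
  fixes H :: "'b::finite \<Rightarrow> 'b \<Rightarrow> bool"
  assumes sgH: "simple_graph H"
  shows "msupp (laplacian (graph_join G H)) (axis (Inl u) 1)
     = {0, real CARD('a) + real CARD('b)} \<union> (\<lambda>k. k + real CARD('b)) ` (Lam - {0})
       \<union> (if connected_graph G then {} else {real CARD('b)})"
proof -
  define m where "m = real CARD('a)"
  define n where "n = real CARD('b)"
  have m0: "m > 0" and n0: "n > 0" unfolding m_def n_def by simp_all
  define LX where "LX = laplacian (graph_join G H)"
  have symX: "symm LX" unfolding LX_def by (rule symm_lap[OF sg_join[OF sg sgH]])
  define onesX where "onesX = ((\<chi> i. 1) :: real^('a+'b))"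
  define c1 where "c1 = 1 / (m + n)"
  define c2 where "c2 = 1 / (m * (m + n))"
  define L0 where "L0 = Lam - {0}"
  have finL0: "finite L0" using finLam L0_def by simp
  define P where "P l = orth_proj (eigenspace LX l) (axis (Inl u) 1)" for l
  have dec: "(axis (Inl u) 1 :: real^('a+'b)) = (\<Sum>k\<in>L0. ext (Y k)) + ext z + c1 *\<^sub>R onesX + c2 *\<^sub>R wvec"
  proof (subst vec_eq_iff, intro allI)
    fix i :: "'a + 'b"
    show "(axis (Inl u) 1 :: real^('a+'b)) $ i = ((\<Sum>k\<in>L0. ext (Y k)) + ext z + c1 *\<^sub>R onesX + c2 *\<^sub>R wvec) $ i"
    proof (cases i)
      case (Inl a)
      have s: "(\<Sum>k\<in>L0. Y k $ a) + Y 0 $ a = (if a = u then 1 else 0)"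
      proof -
        have "(\<Sum>k\<in>Lam. Y k $ a) = Y 0 $ a + (\<Sum>k\<in>L0. Y k $ a)"
          unfolding L0_def using finLam zero_in_Lam by (simp add: sum.remove)
        moreover have "(\<Sum>k\<in>Lam. Y k $ a) = (if a = u then 1 else 0)"
          using arg_cong[OF decG, of "\<lambda>v. v $ a"] by (simp add: sum_component axis_def)
        ultimately show ?thesis by simp
      qed
      have c: "- (1 / m) + c1 + c2 * n = 0" unfolding c1_def c2_def using m0 n0 by (simp add: field_simps)
      have "((\<Sum>k\<in>L0. ext (Y k)) + ext z + c1 *\<^sub>R onesX + c2 *\<^sub>R wvec) $ i
          = ((\<Sum>k\<in>L0. Y k $ a) + Y 0 $ a) + (- (1 / m) + c1 + c2 * n)"
        unfolding Inl by (simp add: sum_component z_def ones_def onesX_def wvec_def m_def n_def)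
      thus ?thesis unfolding s c using Inl by (simp add: axis_def)
    next
      case (Inr b)
      have mn: "m + n \<noteq> 0" using m0 n0 by simp
      have mm: "m * m + m * n > 0" using m0 n0 by (intro add_pos_pos mult_pos_pos)
      have c: "c1 - c2 * m = 0" unfolding c1_def c2_def using m0 mn mm by (simp add: field_simps)
      have "((\<Sum>k\<in>L0. ext (Y k)) + ext z + c1 *\<^sub>R onesX + c2 *\<^sub>R wvec) $ i = c1 - c2 * m"
        unfolding Inr by (simp add: sum_component onesX_def wvec_def m_def)
      thus ?thesis unfolding c using Inr by (simp add: axis_def)
    qed
  qed
  have e1: "LX *v ext (Y k) = (k + n) *\<^sub>R ext (Y k)" if "k \<in> L0" for k
    unfolding LX_def n_def using that L0_def by (intro ext_eig eigY sumYk) auto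
  have e2: "LX *v ext z = n *\<^sub>R ext z"
    unfolding LX_def n_def using ext_eig[OF z_eig sum_z, where H=H] by simp
  have e3: "LX *v onesX = 0 *\<^sub>R onesX" unfolding LX_def onesX_def using lap_ones by simp
  have e4: "LX *v wvec = (m + n) *\<^sub>R wvec" unfolding LX_def m_def n_def by (rule wvec_eig)
  have sub: "subspace (eigenspace LX l)" for l by (rule subspace_eigenspace)
  have Pform: "P l = (\<Sum>k\<in>L0. if k + n = l then ext (Y k) else 0) + (if n = l then ext z else 0)
      + c1 *\<^sub>R (if 0 = l then onesX else 0) + c2 *\<^sub>R (if m + n = l then wvec else 0)" for l
    unfolding P_def dec orth_proj_add[OF sub] orth_proj_sum[OF sub finL0] orth_proj_scale[OF sub]
      orth_proj_eigvec[OF symX e2] orth_proj_eigvec[OF symX e3] orth_proj_eigvec[OF symX e4]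
    using orth_proj_eigvec[OF symX e1] by (simp cong: sum.cong)
  define b0 where "b0 = (undefined :: 'b)"
  have PInr: "P l $ Inr b0 = c1 * (if 0 = l then 1 else 0) - c2 * (if m + n = l then m else 0)" for l
  proof -
    have "(\<Sum>k\<in>L0. if k + n = l then ext (Y k) else (0::real^('a+'b))) $ Inr b0 = 0"
      unfolding sum_component by (intro sum.neutral) auto
    moreover have "(if n = l then ext z else (0::real^('a+'b))) $ Inr b0 = 0" by simp
    ultimately show ?thesis unfolding Pform by (simp add: onesX_def wvec_def m_def)
  qed
  have msX: "msupp LX (axis (Inl u) 1) = {l. P l \<noteq> 0}" unfolding msupp_alt P_def ..
  have "P l \<noteq> 0 \<longleftrightarrow> l \<in> {0, m + n} \<union> (\<lambda>k. k + n) ` L0 \<union> (if connected_graph G then {} else {n})" for l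
  proof (cases "l = 0 \<or> l = m + n")
    case True
    have "P l $ Inr b0 \<noteq> 0"
    proof (cases "l = 0")
      case True thus ?thesis unfolding PInr c1_def using m0 n0 by simp
    next
      case False
      hence "l = m + n" using \<open>l = 0 \<or> l = m + n\<close> by simp
      thus ?thesis unfolding PInr c2_def using m0 n0 by simp
    qed
    hence "P l \<noteq> 0" by auto
    thus ?thesis using True by auto
  next
    case False
    hence l0: "l \<noteq> 0" "l \<noteq> m + n" by auto
    have P1: "P l = (\<Sum>k\<in>L0. if k + n = l then ext (Y k) else 0) + (if n = l then ext z else 0)"
      unfolding Pform using l0 by simp
    show ?thesis
    proof (cases "l = n")
      case True
      have "(\<Sum>k\<in>L0. if k + n = l then ext (Y k) else 0) = (0 :: real^('a+'b))"
        using True L0_def by (intro sum.neutral) auto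
      hence "P l = ext z" unfolding P1 using True by simp
      hence "P l \<noteq> 0 \<longleftrightarrow> \<not> connected_graph G" by (metis ext_zero_iff z_zero_iff)
      moreover have "l \<notin> (\<lambda>k. k + n) ` L0" using True L0_def by auto
      ultimately show ?thesis using l0 True by auto
    next
      case False
      have "(\<Sum>k\<in>L0. if k + n = l then ext (Y k) else 0) = (\<Sum>k\<in>L0. if k = l - n then ext (Y k) else (0 :: real^('a+'b)))"
        by (intro sum.cong) auto
      also have "\<dots> = (if l - n \<in> L0 then ext (Y (l - n)) else 0)"
        using finL0 by (simp add: sum.delta')
      finally have "P l = (if l - n \<in> L0 then ext (Y (l - n)) else 0)" unfolding P1 using False by simp
      hence "P l \<noteq> 0 \<longleftrightarrow> l - n \<in> L0" using ext_zero_iff Y_nz_iff L0_def by auto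
      moreover have "l \<in> (\<lambda>k. k + n) ` L0 \<longleftrightarrow> l - n \<in> L0" by force
      ultimately show ?thesis using l0 False by auto
    qed
  qed
  thus ?thesis unfolding msX[unfolded LX_def] m_def n_def L0_def by blast
qed

end

lemma dvd_prod_diff:
  fixes f g :: "'i \<Rightarrow> int"
  assumes "\<forall>i\<in>A. q dvd f i - g i"
  shows "q dvd prod f A - prod g A"
proof (cases "finite A")
  case True
  thus ?thesis using assms
  proof (induction rule: finite_induct)
    case empty thus ?case by simp
  next
    case (insert a F)
    have "prod f (insert a F) - prod g (insert a F) = f a * (prod f F - prod g F) + (f a - g a) * prod g F"
      using insert by (simp add: algebra_simps)
    thus ?case using insert by simp
  qed
qed simp

lemma dvd_sum_diff:
  fixes f g :: "'i \<Rightarrow> int"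
  assumes "\<forall>i\<in>A. q dvd f i - g i"
  shows "q dvd sum f A - sum g A"
proof -
  have "sum f A - sum g A = (\<Sum>i\<in>A. f i - g i)" by (simp add: sum_subtractf)
  thus ?thesis using assms by (simp add: dvd_sum)
qed

lemma det_zero_of_kernel:
  fixes A :: "real^'n^'n"
  assumes "A *v x = 0" "x \<noteq> 0"
  shows "det A = 0"
proof (rule ccontr)
  assume "det A \<noteq> 0"
  then obtain B where B: "B ** A = mat 1"
    using invertible_det_nz[of A] unfolding invertible_def by blast
  have "x = (B ** A) *v x" by (simp add: B)
  also have "\<dots> = B *v (A *v x)" by (simp add: matrix_vector_mul_assoc)
  also have "\<dots> = 0" using assms by simp
  finally show False using assms by simp
qed

lemma det_of_int:
  fixes B :: "int^'n^'n"
  shows "det (\<chi> i j. real_of_int (B $ i $ j)) = real_of_int (det B)"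
  unfolding det_def by (simp add: of_int_sum of_int_prod)

lemma int_eigenvalue:
  fixes M :: "real^'n^'n"
  assumes intM: "\<forall>i j. M $ i $ j \<in> \<int>" and ev: "M *v x = l *\<^sub>R x" "x \<noteq> 0" and rat: "l \<in> \<rat>"
  shows "l \<in> \<int>"
proof -
  obtain p q :: int where q0: "q > 0" and cop: "coprime p q" and lpq: "l = of_int p / of_int q"
    using Rats_cases'[OF rat] by blast
  define Mi where "Mi i j = \<lfloor>M $ i $ j\<rfloor>" for i j
  have Mi: "M $ i $ j = of_int (Mi i j)" for i j
    using intM unfolding Mi_def by (metis Ints_cases floor_of_int)
  define B :: "int^'n^'n" where "B = (\<chi> i j. (if i = j then p else 0) - q * Mi i j)"
  have Bx: "(\<chi> i j. real_of_int (B $ i $ j)) *v x = 0"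
  proof -
    have "((\<chi> i j. real_of_int (B $ i $ j)) *v x) $ i = of_int p * x $ i - of_int q * (M *v x) $ i" for i
    proof -
      have "((\<chi> i j. real_of_int (B $ i $ j)) *v x) $ i
          = (\<Sum>j\<in>UNIV. (if i = j then of_int p * x $ j else 0) - of_int q * (M $ i $ j * x $ j))"
        unfolding matrix_vector_mult_def B_def Mi vec_lambda_beta by (intro sum.cong refl) (simp add: algebra_simps)
      also have "\<dots> = of_int p * x $ i - of_int q * (M *v x) $ i"
        by (simp add: sum_subtractf matrix_vector_mult_def sum_distrib_left)
      finally show ?thesis .
    qed
    moreover have "of_int q * l = of_int p" using q0 lpq by simp
    ultimately show ?thesis using ev by (simp add: vec_eq_iff mult.assoc[symmetric])
  qed
  have "det B = 0"
    using det_zero_of_kernel[OF Bx ev(2)] det_of_int[of B] by simp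
  have cong1: "q dvd (\<Prod>i\<in>UNIV. B $ i $ s i) - (\<Prod>i\<in>UNIV. if s i = i then p else 0)" for s
    by (intro dvd_prod_diff) (auto simp: B_def)
  have "q dvd (\<Sum>s\<in>{s. s permutes UNIV}. of_int (sign s) * (\<Prod>i\<in>UNIV. B $ i $ s i))
         - (\<Sum>s\<in>{s. s permutes (UNIV::'n set)}. of_int (sign s) * (\<Prod>i\<in>UNIV. if s i = i then p else 0))"
  proof (rule dvd_sum_diff[where f="\<lambda>s. of_int (sign s) * (\<Prod>i\<in>UNIV. B $ i $ s i)"
      and g="\<lambda>s. of_int (sign s) * (\<Prod>i\<in>UNIV. if s i = i then p else 0)"], intro ballI)
    fix s
    show "q dvd of_int (sign s) * (\<Prod>i\<in>UNIV. B $ i $ s i) - of_int (sign s) * (\<Prod>i\<in>UNIV. if s i = i then p else 0)"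
    proof -
      have "of_int (sign s) * (\<Prod>i\<in>UNIV. B $ i $ s i) - of_int (sign s) * (\<Prod>i\<in>UNIV. if s i = i then p else 0)
          = of_int (sign s) * ((\<Prod>i\<in>UNIV. B $ i $ s i) - (\<Prod>i\<in>UNIV. if s i = i then p else 0))"
        by (simp add: right_diff_distrib)
      thus ?thesis using dvd_mult[OF cong1[of s]] by simp
    qed
  qed
  moreover have "(\<Sum>s\<in>{s. s permutes (UNIV::'n set)}. of_int (sign s) * (\<Prod>i\<in>UNIV. if s i = i then p else 0))
      = p ^ CARD('n)"
  proof -
    have "(\<Sum>s\<in>{s. s permutes (UNIV::'n set)}. of_int (sign s) * (\<Prod>i\<in>UNIV. if s i = i then p else 0))
        = (\<Sum>s\<in>{s. s permutes (UNIV::'n set)}. if s = id then p ^ CARD('n) else 0)"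
    proof (intro sum.cong refl)
      fix s assume "s \<in> {s. s permutes (UNIV::'n set)}"
      show "of_int (sign s) * (\<Prod>i\<in>UNIV. if s i = i then p else 0) = (if s = id then p ^ CARD('n) else 0)"
      proof (cases "s = id")
        case True thus ?thesis by (simp add: sign_id)
      next
        case False
        then obtain i where "s i \<noteq> i" by (metis eq_id_iff)
        hence "(\<Prod>i\<in>UNIV. if s i = i then p else 0) = 0" by (intro prod_zero) auto
        thus ?thesis using False by simp
      qed
    qed
    also have "\<dots> = p ^ CARD('n)" by (simp add: permutes_id)
    finally show ?thesis .
  qed
  moreover have "det B = (\<Sum>s\<in>{s. s permutes UNIV}. of_int (sign s) * (\<Prod>i\<in>UNIV. B $ i $ s i))"
    unfolding det_def ..
  ultimately have "q dvd 0 - p ^ CARD('n)" using \<open>det B = 0\<close> by simp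
  hence qd: "q dvd p ^ CARD('n)" by simp
  have "coprime (p ^ CARD('n)) q" using cop by simp
  hence "is_unit q" by (rule coprime_common_divisor[OF _ qd dvd_refl])
  hence "q = 1" using q0 by simp
  thus ?thesis using lpq by simp
qed

lemma pe2: "prime_elem (2::int)"
  by (simp add: prime_elem_iff_prime_abs)

lemma nu2_mult: "x \<noteq> 0 \<Longrightarrow> y \<noteq> 0 \<Longrightarrow> nu2 (x * y) = nu2 x + nu2 y"
  unfolding nu2_def by (rule prime_elem_multiplicity_mult_distrib[OF pe2])

lemma nu2_two: "nu2 2 = 1"
  unfolding nu2_def using pe2 by simp

lemma nu2_pos_iff: "w \<noteq> 0 \<Longrightarrow> nu2 w > 0 \<longleftrightarrow> 2 dvd w"
  unfolding nu2_def by (rule multiplicity_gt_zero_iff) auto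

lemma nu2_odd: "nu2 (2 * k + 1) = 0"
proof -
  have "2 * k + 1 \<noteq> 0" by presburger
  thus ?thesis using nu2_pos_iff[of "2 * k + 1"] by simp
qed

lemma Gcd_fin_pos:
  fixes A :: "int set"
  assumes "finite A" "d \<in> A" "d \<noteq> 0"
  shows "Gcd A > 0"
proof -
  have "Gcd A \<noteq> 0" using assms by (auto simp: Gcd_0_iff)
  moreover have "Gcd A \<ge> 0" by simp
  ultimately show ?thesis by linarith
qed


definition PP :: "int \<Rightarrow> int set \<Rightarrow> real \<Rightarrow> bool" where
  "PP d N t \<longleftrightarrow> t > 0 \<and> (\<exists>k::int. 2 * t * of_int d = of_int (2 * k + 1) * pi)
      \<and> (\<forall>x\<in>N. \<exists>j::int. t * of_int x = of_int j * pi)"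

lemma PP_rel:
  assumes "2 * t * of_int d = of_int (2 * k + 1) * pi" "t * of_int x = of_int j * pi"
  shows "(2 * k + 1) * x = 2 * d * j"
proof -
  have "of_int (2 * k + 1) * pi * of_int x = (2 * t * of_int d) * of_int x"
    using assms(1) by simp
  also have "\<dots> = 2 * of_int d * (t * of_int x)" by (simp add: mult_ac)
  also have "\<dots> = of_int (2 * d * j) * pi" using assms(2) by simp
  finally have "of_int ((2 * k + 1) * x) * pi = of_int (2 * d * j) * pi" by (simp add: mult_ac)
  hence "real_of_int ((2 * k + 1) * x) = of_int (2 * d * j)" using pi_neq_zero by simp
  thus ?thesis by (simp only: of_int_eq_iff)
qed

lemma nt_nec:
  assumes d0: "d > 0" and Npos: "\<forall>x\<in>N. x > 0" and P: "PP d N t"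
  shows "\<forall>x\<in>N. nu2 x > nu2 d"
proof
  fix x assume xN: "x \<in> N"
  obtain k where k: "2 * t * of_int d = of_int (2 * k + 1) * pi" using P unfolding PP_def by blast
  obtain j where j: "t * of_int x = of_int j * pi" using P xN unfolding PP_def by blast
  have e: "(2 * k + 1) * x = 2 * (d * j)" using PP_rel[OF k j] by simp
  have o: "2 * k + 1 \<noteq> 0" by presburger
  have x0: "x \<noteq> 0" using Npos xN by force
  have j0: "j \<noteq> 0" using e o x0 by auto
  have "nu2 ((2 * k + 1) * x) = nu2 x" using nu2_mult[OF o x0] nu2_odd by simp
  moreover have "nu2 (2 * (d * j)) = 1 + nu2 d + nu2 j"
    using nu2_mult[of 2 "d * j"] nu2_mult[of d j] nu2_two d0 j0 by simp
  ultimately show "nu2 x > nu2 d" using e by simp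
qed

lemma nt_suff:
  assumes fin: "finite N" and d0: "d > 0" and Npos: "\<forall>x\<in>N. x > 0"
    and nu: "\<forall>x\<in>N. nu2 x > nu2 d"
  shows "PP d N (pi / (2 * of_int (Gcd (insert d N))))
     \<and> (\<forall>t. PP d N t \<longrightarrow> pi / (2 * of_int (Gcd (insert d N))) \<le> t)"
proof -
  define g where "g = Gcd (insert d N)"
  have g0: "g > 0" unfolding g_def using fin d0 by (intro Gcd_fin_pos) auto
  obtain a where a: "d = g * a" unfolding g_def by (meson Gcd_dvd dvdE insertI1)
  have a0: "a \<noteq> 0" using a d0 by auto
  have evb: "2 * g dvd x" if xN: "x \<in> N" for x
  proof -
    obtain b where b: "x = g * b" unfolding g_def using xN by (meson Gcd_dvd dvdE insertI2)
    have b0: "b \<noteq> 0" using b Npos xN by force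
    have "nu2 x = nu2 g + nu2 b" using nu2_mult[of g b] b g0 b0 by simp
    moreover have "nu2 d = nu2 g + nu2 a" using nu2_mult[of g a] a g0 a0 by simp
    ultimately have "nu2 b > 0" using nu xN by force
    hence "2 dvd b" using nu2_pos_iff b0 by blast
    thus ?thesis using b by simp
  qed
  have "\<not> 2 dvd a"
  proof
    assume "2 dvd a"
    hence "2 * g dvd d" using a by simp
    hence "\<forall>x\<in>insert d N. 2 * g dvd x" using evb by blast
    hence "2 * g dvd g" unfolding g_def by (intro Gcd_greatest) blast
    thus False using g0 by (simp add: zdvd_not_zless)
  qed
  then obtain k where k: "a = 2 * k + 1" by (metis oddE)
  define t0 where "t0 = pi / (2 * of_int g)"
  have t0pos: "t0 > 0" unfolding t0_def using g0 by simp
  have P0: "PP d N t0"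
    unfolding PP_def
  proof (intro conjI ballI)
    show "t0 > 0" by (rule t0pos)
    show "\<exists>k::int. 2 * t0 * of_int d = of_int (2 * k + 1) * pi"
      using g0 unfolding t0_def a k by (intro exI[of _ k]) (simp add: field_simps)
    fix x assume xN: "x \<in> N"
    obtain j where j: "x = 2 * g * j" using evb[OF xN] by (metis dvdE)
    show "\<exists>j::int. t0 * of_int x = of_int j * pi"
      using g0 unfolding t0_def j by (intro exI[of _ j]) (simp add: field_simps)
  qed
  have minimal: "t0 \<le> t" if P: "PP d N t" for t
  proof -
    obtain k' where k': "2 * t * of_int d = of_int (2 * k' + 1) * pi" using P unfolding PP_def by blast
    define c where "c = 2 * k' + 1"
    have tpos: "t > 0" using P unfolding PP_def by blast
    have "of_int c * pi > 0" using k' tpos d0 unfolding c_def[symmetric] by (metis mult_pos_pos of_int_0_less_iff zero_less_numeral)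
    hence c0: "c > 0" by (simp add: zero_less_mult_iff)
    have dv: "d dvd c * x" if "x \<in> insert d N" for x
    proof (cases "x = d")
      case True thus ?thesis by simp
    next
      case False
      hence xN: "x \<in> N" using that by blast
      obtain j where j: "t * of_int x = of_int j * pi" using P xN unfolding PP_def by blast
      have "c * x = d * (2 * j)" using PP_rel[OF k' j] unfolding c_def by simp
      thus ?thesis by simp
    qed
    have "d dvd Gcd ((*) c ` insert d N)" using dv by (intro Gcd_greatest) blast
    hence "d dvd c * g" unfolding Gcd_mult g_def using c0 g0 by simp
    then obtain w where w: "c * g = d * w" by (metis dvdE)
    have "w > 0" using w c0 g0 d0 by (metis mult_pos_pos zero_less_mult_pos)
    hence "c * g \<ge> d" using w d0 by (simp add: mult_le_cancel_left1)
    hence cg: "real_of_int d \<le> of_int c * of_int g" by (metis of_int_le_iff of_int_mult)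
    have t: "t = of_int c * pi / (2 * of_int d)" using k' d0 unfolding c_def by (simp add: field_simps)
    show ?thesis unfolding t t0_def using g0 d0 cg
      by (simp add: divide_simps)
  qed
  show ?thesis using P0 minimal unfolding t0_def g_def by blast
qed

lemma cis_eq_1_iff: "cis x = 1 \<longleftrightarrow> cos x = 1"
proof
  assume "cos x = 1"
  moreover have "(sin x)^2 + (cos x)^2 = 1" by simp
  ultimately have "sin x = 0" by simp
  thus "cis x = 1" using \<open>cos x = 1\<close> by (simp add: complex_eq_iff)
qed (simp add: complex_eq_iff)

lemma cis_eq_m1_iff: "cis x = -1 \<longleftrightarrow> cos x = -1"
proof
  assume "cos x = -1"
  moreover have "(sin x)^2 + (cos x)^2 = 1" by simp
  ultimately have "sin x = 0" by simp
  thus "cis x = -1" using \<open>cos x = -1\<close> by (simp add: complex_eq_iff)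
qed (simp add: complex_eq_iff)

lemma expi_eq_1: "exp (\<i> * complex_of_real x) = 1 \<longleftrightarrow> (\<exists>j::int. x = 2 * of_int j * pi)"
  unfolding cis_conv_exp[symmetric] cis_eq_1_iff cos_one_2pi_int by (simp add: mult_ac)

lemma expi_eq_m1: "exp (\<i> * complex_of_real x) = -1 \<longleftrightarrow> (\<exists>k::int. x = of_int (2 * k + 1) * pi)"
  unfolding cis_conv_exp[symmetric] cis_eq_m1_iff cos_eq_minus1 by simp

lemma pst_general:
  fixes S :: "real set" and D :: real
  assumes "0 \<in> S"
  shows "(t > 0 \<and> (\<forall>m\<in>S. exp (\<i> * complex_of_real (2 * t * m)) = - exp (\<i> * complex_of_real (2 * t * D))))
    \<longleftrightarrow> (t > 0 \<and> (\<exists>k::int. 2 * t * D = of_int (2 * k + 1) * pi) \<and> (\<forall>m\<in>S - {0}. \<exists>j::int. t * m = of_int j * pi))"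
proof -
  have "(\<forall>m\<in>S. exp (\<i> * complex_of_real (2 * t * m)) = - exp (\<i> * complex_of_real (2 * t * D)))
      \<longleftrightarrow> exp (\<i> * complex_of_real (2 * t * D)) = -1 \<and> (\<forall>m\<in>S - {0}. exp (\<i> * complex_of_real (2 * t * m)) = 1)"
  proof
    assume A: "\<forall>m\<in>S. exp (\<i> * complex_of_real (2 * t * m)) = - exp (\<i> * complex_of_real (2 * t * D))"
    hence "1 = - exp (\<i> * complex_of_real (2 * t * D))" using assms by fastforce
    hence e: "exp (\<i> * complex_of_real (2 * t * D)) = -1" by (simp add: minus_equation_iff)
    thus "exp (\<i> * complex_of_real (2 * t * D)) = -1 \<and> (\<forall>m\<in>S - {0}. exp (\<i> * complex_of_real (2 * t * m)) = 1)"
      using A by simp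
  next
    assume "exp (\<i> * complex_of_real (2 * t * D)) = -1 \<and> (\<forall>m\<in>S - {0}. exp (\<i> * complex_of_real (2 * t * m)) = 1)"
    thus "\<forall>m\<in>S. exp (\<i> * complex_of_real (2 * t * m)) = - exp (\<i> * complex_of_real (2 * t * D))"
      by (metis DiffI empty_iff insert_iff minus_minus mult_zero_right of_real_0 exp_zero)
  qed
  moreover have "exp (\<i> * complex_of_real (2 * t * m)) = 1 \<longleftrightarrow> (\<exists>j::int. t * m = of_int j * pi)" for m
    unfolding expi_eq_1 by (simp add: mult.assoc)
  ultimately show ?thesis unfolding expi_eq_m1 by auto
qed

theorem theorem7:
  fixes G :: "'a::finite \<Rightarrow> 'a \<Rightarrow> bool" and H :: "'b::finite \<Rightarrow> 'b \<Rightarrow> bool"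
    and u :: 'a and m n :: nat
  assumes "simple_graph G" and "simple_graph H"
    and "m = CARD('a)" and "n = CARD('b)"
    and "real (degree G u) \<notin> eig_support G u"
  shows "((\<exists>t. lap_pst (blowup2 (graph_join G H)) (False, Inl u) (True, Inl u) t)
          \<longleftrightarrow>
          (eig_support G u \<subseteq> \<int> \<and>
           ((connected_graph G
             \<and> nu2 (int m + int n) > nu2 (int (degree G u) + int n)
             \<and> (\<forall>k::int. of_int k \<in> eig_support G u - {0} \<longrightarrow>
                   nu2 (k + int n) > nu2 (int (degree G u) + int n)))
            \<or>
            (\<not> connected_graph G \<and> \<not> isolated G u
             \<and> nu2 (int n) > nu2 (int (degree G u) + int n)
             \<and> nu2 (int m + int n) > nu2 (int (degree G u) + int n)
             \<and> (\<forall>k::int. of_int k \<in> eig_support G u - {0} \<longrightarrow>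
                   nu2 (k + int n) > nu2 (int (degree G u) + int n))))))
        \<and>
        ((\<exists>t. lap_pst (blowup2 (graph_join G H)) (False, Inl u) (True, Inl u) t) \<longrightarrow>
          (let S1 = {k + int n | k. of_int k \<in> eig_support G u - {0}}
                      \<union> {int (degree G u) + int n, int m + int n};
               S2 = {k + int n | k. of_int k \<in> eig_support G u}
                      \<union> {int (degree G u) + int n, int m + int n};
               cond1 = (connected_graph G
                  \<and> nu2 (int m + int n) > nu2 (int (degree G u) + int n)
                  \<and> (\<forall>k::int. of_int k \<in> eig_support G u - {0} \<longrightarrow>
                        nu2 (k + int n) > nu2 (int (degree G u) + int n)));
               h = (if cond1 then Gcd S1 else Gcd S2);
               \<tau> = pi / (2 * real_of_int h)
           in lap_pst (blowup2 (graph_join G H)) (False, Inl u) (True, Inl u) \<tau>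
              \<and> (\<forall>t. lap_pst (blowup2 (graph_join G H)) (False, Inl u) (True, Inl u) t \<longrightarrow> \<tau> \<le> t)))"
proof -
  interpret gctx G u by unfold_locales (rule assms(1))
  note sgG = assms(1) and sgH = assms(2)
  define X where "X = graph_join G H"
  have sgX: "simple_graph X" unfolding X_def by (rule sg_join[OF sgG sgH])
  define PST where "PST t \<longleftrightarrow> lap_pst (blowup2 X) (False, Inl u) (True, Inl u) t" for t
  have LamE: "eig_support G u = Lam" by (simp add: Lam_def eig_support_msupp)
  define D :: int where "D = int (degree G u) + int n"
  define SX where "SX = msupp (laplacian X) (axis (Inl u) 1)"
  have SXeq: "SX = {0, real m + real n} \<union> (\<lambda>k. k + real n) ` (Lam - {0}) \<union> (if connected_graph G then {} else {real n})"
    using join_supp[OF sgH] assms(3,4) unfolding SX_def X_def by simp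
  have degX: "real (degree X (Inl u)) = real_of_int D"
    unfolding X_def D_def degree_join_Inl assms(4) by simp
  have n0: "n > 0" and m0: "m > 0" using assms(3,4) by simp_all
  have D0: "D > 0" unfolding D_def using n0 by simp
  have SX0: "0 \<in> SX" unfolding SXeq by simp
  have pst1: "PST t \<longleftrightarrow> t > 0 \<and> (\<exists>k::int. 2 * t * of_int D = of_int (2 * k + 1) * pi)
      \<and> (\<forall>x\<in>SX - {0}. \<exists>j::int. t * x = of_int j * pi)" for t
  proof -
    have "PST t \<longleftrightarrow> t > 0 \<and> (\<forall>x\<in>SX. exp (\<i> * complex_of_real (2 * t * x))
        = - exp (\<i> * complex_of_real (2 * t * real_of_int D)))"
      unfolding PST_def blowup_pst[OF sgX] SX_def degX ..
    thus ?thesis using pst_general[OF SX0, of t "real_of_int D"] by simp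
  qed
  have notiso: "\<not> isolated G u"
  proof
    assume "isolated G u"
    hence "degree G u = 0" unfolding isolated_def degree_def by simp
    thus False using assms(5) zero_in_Lam LamE by simp
  qed
  define KS where "KS = {k::int. of_int k \<in> Lam - {0}}"
  define N where "N = insert (int m + int n) ((\<lambda>k. k + int n) ` KS \<union> (if connected_graph G then {} else {int n}))"
  have injI: "inj (\<lambda>k::int. (of_int k :: real))" by (simp add: inj_def)
  have finKS: "finite KS"
  proof -
    have "KS \<subseteq> (\<lambda>k::int. (of_int k :: real)) -` Lam" unfolding KS_def by auto
    moreover have "finite ((\<lambda>k::int. (of_int k :: real)) -` Lam)"
      using finLam injI by (intro finite_vimageI) auto
    ultimately show ?thesis by (rule finite_subset)
  qed
  have finN: "finite N" unfolding N_def using finKS by simp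
  have KSpos: "k > 0" if "k \<in> KS" for k
  proof -
    have "of_int k \<in> Lam" "(of_int k :: real) \<noteq> 0" using that unfolding KS_def by auto
    hence "(of_int k :: real) > 0" using Lam_nonneg by force
    thus ?thesis by simp
  qed
  have Npos: "\<forall>x\<in>N. x > 0" unfolding N_def using n0 m0 by (auto dest!: KSpos)
  have SXN: "SX - {0} = (\<lambda>k. real_of_int k) ` N" if LZ: "Lam \<subseteq> \<int>"
  proof
    show "SX - {0} \<subseteq> (\<lambda>k. real_of_int k) ` N"
    proof
      fix x assume x: "x \<in> SX - {0}"
      show "x \<in> (\<lambda>k. real_of_int k) ` N"
      proof (cases "x \<in> (\<lambda>k. k + real n) ` (Lam - {0})")
        case True
        then obtain l where l: "l \<in> Lam - {0}" "x = l + real n" by blast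
        then obtain k where k: "l = of_int k" using LZ by (meson DiffD1 Ints_cases subsetD)
        have "k \<in> KS" unfolding KS_def using l k by simp
        hence "k + int n \<in> N" unfolding N_def by blast
        thus ?thesis using l k by force
      next
        case False
        hence "x = real m + real n \<or> (\<not> connected_graph G \<and> x = real n)"
          using x unfolding SXeq by (auto split: if_splits)
        thus ?thesis unfolding N_def by (auto intro!: image_eqI)
      qed
    qed
  next
    show "(\<lambda>k. real_of_int k) ` N \<subseteq> SX - {0}"
    proof
      fix x assume "x \<in> (\<lambda>k. real_of_int k) ` N"
      then obtain y where y: "y \<in> N" "x = of_int y" by blast
      have "x \<noteq> 0" using y Npos by force
      moreover have "x \<in> SX"
      proof -
        consider "y = int m + int n" | k where "k \<in> KS" "y = k + int n" | "\<not> connected_graph G" "y = int n"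
          using y unfolding N_def by (auto split: if_splits)
        thus ?thesis
        proof cases
          case 1 thus ?thesis using y unfolding SXeq by simp
        next
          case (2 k)
          hence "of_int k \<in> Lam - {0}" unfolding KS_def by blast
          hence "of_int k + real n \<in> SX" unfolding SXeq by blast
          thus ?thesis using y 2 by simp
        next
          case 3 thus ?thesis using y unfolding SXeq by simp
        qed
      qed
      ultimately show "x \<in> SX - {0}" by blast
    qed
  qed
  have PSTPP: "PST t \<longleftrightarrow> PP D N t" if LZ: "Lam \<subseteq> \<int>" for t
    unfolding pst1 PP_def SXN[OF LZ] by (simp add: mult.commute)
  have nonint: "\<not> PST t" if nLZ: "\<not> Lam \<subseteq> \<int>" for t
  proof
    assume P: "PST t"
    obtain l where l: "l \<in> Lam" "l \<notin> \<int>" using nLZ by blast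
    have l0: "l \<noteq> 0" using l by auto
    have "l + real n \<in> SX - {0}" unfolding SXeq using l l0 Lam_nonneg[OF l(1)] n0 by auto
    then obtain j :: int where j: "t * (l + real n) = of_int j * pi" using P pst1 by blast
    obtain k :: int where k: "2 * t * of_int D = of_int (2 * k + 1) * pi" using P pst1 by blast
    have "(l + real n) * of_int (2 * k + 1) * pi = (l + real n) * (2 * t * of_int D)" using k by simp
    also have "\<dots> = 2 * of_int D * (t * (l + real n))" by (simp add: mult_ac)
    also have "\<dots> = of_int (2 * D * j) * pi" using j by simp
    finally have "(l + real n) * of_int (2 * k + 1) = of_int (2 * D * j)" by simp
    moreover have "(of_int (2 * k + 1) :: real) \<noteq> 0" by (simp only: of_int_eq_0_iff) presburger
    ultimately have "l = of_int (2 * D * j) / of_int (2 * k + 1) - real n" by (simp add: field_simps)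
    hence lQ: "l \<in> \<rat>" by simp
    obtain x where x: "x \<noteq> 0" "laplacian G *v x = l *\<^sub>R x" using l(1) unfolding Lam_def msupp_def by blast
    have "\<forall>i j. laplacian G $ i $ j \<in> \<int>" by (simp add: laplacian_def)
    hence "l \<in> \<int>" using int_eigenvalue x lQ by blast
    thus False using l by blast
  qed
  define Q where "Q \<longleftrightarrow> (\<forall>x\<in>N. nu2 x > nu2 D)"
  have RHS: "(eig_support G u \<subseteq> \<int> \<and>
           ((connected_graph G
             \<and> nu2 (int m + int n) > nu2 (int (degree G u) + int n)
             \<and> (\<forall>k::int. of_int k \<in> eig_support G u - {0} \<longrightarrow>
                   nu2 (k + int n) > nu2 (int (degree G u) + int n)))
            \<or>
            (\<not> connected_graph G \<and> \<not> isolated G u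
             \<and> nu2 (int n) > nu2 (int (degree G u) + int n)
             \<and> nu2 (int m + int n) > nu2 (int (degree G u) + int n)
             \<and> (\<forall>k::int. of_int k \<in> eig_support G u - {0} \<longrightarrow>
                   nu2 (k + int n) > nu2 (int (degree G u) + int n)))))
      \<longleftrightarrow> Lam \<subseteq> \<int> \<and> Q"
    unfolding LamE D_def[symmetric] Q_def N_def KS_def using notiso by auto
  have cond1_iff: "(connected_graph G
                  \<and> nu2 (int m + int n) > nu2 (int (degree G u) + int n)
                  \<and> (\<forall>k::int. of_int k \<in> eig_support G u - {0} \<longrightarrow>
                        nu2 (k + int n) > nu2 (int (degree G u) + int n))) \<longleftrightarrow> connected_graph G" if Q
    using that unfolding LamE D_def[symmetric] Q_def N_def KS_def by auto
  have part1: "(\<exists>t. PST t) \<longleftrightarrow> Lam \<subseteq> \<int> \<and> Q"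
  proof
    assume "\<exists>t. PST t"
    then obtain t where P: "PST t" by blast
    have LZ: "Lam \<subseteq> \<int>" using nonint P by blast
    have "Q" unfolding Q_def using nt_nec[OF D0 Npos] P PSTPP[OF LZ] by blast
    thus "Lam \<subseteq> \<int> \<and> Q" using LZ by blast
  next
    assume "Lam \<subseteq> \<int> \<and> Q"
    thus "\<exists>t. PST t" using nt_suff[OF finN D0 Npos] PSTPP Q_def by blast
  qed
  define S1 where "S1 = {k + int n | k. of_int k \<in> eig_support G u - {0}}
                      \<union> {int (degree G u) + int n, int m + int n}"
  define S2 where "S2 = {k + int n | k. of_int k \<in> eig_support G u}
                      \<union> {int (degree G u) + int n, int m + int n}"
  define cond1 where "cond1 \<longleftrightarrow> (connected_graph G
                  \<and> nu2 (int m + int n) > nu2 (int (degree G u) + int n)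
                  \<and> (\<forall>k::int. of_int k \<in> eig_support G u - {0} \<longrightarrow>
                        nu2 (k + int n) > nu2 (int (degree G u) + int n)))"
  have GcdEq: "(if cond1 then Gcd S1 else Gcd S2) = Gcd (insert D N)" if LQ: "Lam \<subseteq> \<int> \<and> Q"
  proof (cases "connected_graph G")
    case True
    hence c1: "cond1" using cond1_iff LQ unfolding cond1_def by blast
    have "S1 = insert D N" unfolding S1_def N_def KS_def LamE D_def using True by auto
    thus ?thesis using c1 by simp
  next
    case False
    hence c1: "\<not> cond1" unfolding cond1_def by blast
    have "S2 = insert D N"
    proof
      show "S2 \<subseteq> insert D N" unfolding S2_def N_def KS_def LamE D_def using False by force
      show "insert D N \<subseteq> S2" unfolding S2_def N_def KS_def LamE D_def using False zero_in_Lam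
        by (auto intro: exI[of _ 0])
    qed
    thus ?thesis using c1 by simp
  qed
  show ?thesis
  proof (intro conjI impI)
    show "(\<exists>t. lap_pst (blowup2 (graph_join G H)) (False, Inl u) (True, Inl u) t) \<longleftrightarrow>
          (eig_support G u \<subseteq> \<int> \<and>
           ((connected_graph G
             \<and> nu2 (int m + int n) > nu2 (int (degree G u) + int n)
             \<and> (\<forall>k::int. of_int k \<in> eig_support G u - {0} \<longrightarrow>
                   nu2 (k + int n) > nu2 (int (degree G u) + int n)))
            \<or>
            (\<not> connected_graph G \<and> \<not> isolated G u
             \<and> nu2 (int n) > nu2 (int (degree G u) + int n)
             \<and> nu2 (int m + int n) > nu2 (int (degree G u) + int n)
             \<and> (\<forall>k::int. of_int k \<in> eig_support G u - {0} \<longrightarrow>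
                   nu2 (k + int n) > nu2 (int (degree G u) + int n)))))"
      unfolding RHS part1[unfolded PST_def X_def, symmetric] ..
  next
    assume "\<exists>t. lap_pst (blowup2 (graph_join G H)) (False, Inl u) (True, Inl u) t"
    hence LQ: "Lam \<subseteq> \<int> \<and> Q" using part1 unfolding PST_def X_def by blast
    have h: "(if cond1 then Gcd S1 else Gcd S2) = Gcd (insert D N)" by (rule GcdEq[OF LQ])
    have nts: "PP D N (pi / (2 * of_int (Gcd (insert D N))))
     \<and> (\<forall>t. PP D N t \<longrightarrow> pi / (2 * of_int (Gcd (insert D N))) \<le> t)"
      using nt_suff[OF finN D0 Npos] LQ unfolding Q_def by blast
    have eqv: "lap_pst (blowup2 (graph_join G H)) (False, Inl u) (True, Inl u) t \<longleftrightarrow> PP D N t" for t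
      using PSTPP[of t] LQ unfolding PST_def X_def by blast
    show "let S1 = {k + int n | k. of_int k \<in> eig_support G u - {0}}
                      \<union> {int (degree G u) + int n, int m + int n};
               S2 = {k + int n | k. of_int k \<in> eig_support G u}
                      \<union> {int (degree G u) + int n, int m + int n};
               cond1 = (connected_graph G
                  \<and> nu2 (int m + int n) > nu2 (int (degree G u) + int n)
                  \<and> (\<forall>k::int. of_int k \<in> eig_support G u - {0} \<longrightarrow>
                        nu2 (k + int n) > nu2 (int (degree G u) + int n)));
               h = (if cond1 then Gcd S1 else Gcd S2);
               \<tau> = pi / (2 * real_of_int h)
           in lap_pst (blowup2 (graph_join G H)) (False, Inl u) (True, Inl u) \<tau>
              \<and> (\<forall>t. lap_pst (blowup2 (graph_join G H)) (False, Inl u) (True, Inl u) t \<longrightarrow> \<tau> \<le> t)"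
      unfolding Let_def S1_def[symmetric] S2_def[symmetric] cond1_def[symmetric] h eqv using nts by blast
  qed
qed

end
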